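(* Let $C$ be a conformal algebra whose coefficient algebra $\operatorname{Coeff}C$ is commutative. Then $\operatorname{Coeff}C$ is a Jordan algebra (i.e. $C$ is a Jordan conformal algebra) if and only if for all $a,b,c,d\in C$ and all integers $n,m,l\ge0$: $$a_{(n)}(b_{(m)}(c_{(l)}d))+\sum_{s_1,s_2\ge0}\binom{n}{s_1}\binom{m}{s_2}\big(b_{(m-s_2)}(a_{(n-s_1)}c)\big)_{(l+s_1+s_2)}d+c_{(l)}(b_{(m)}(a_{(n)}d))$$ $$=\sum_{s\ge0}\binom ns(a_{(n-s)}b)_{(m+s)}(c_{(l)}d)+\sum_{s\ge0}\binom ns(a_{(n-s)}c)_{(l+s)}(b_{(m)}d)+\sum_{s\ge0}\binom ls(c_{(l-s)}b)_{(m+s)}(a_{(n)}d).$$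
   Context: $\Bbbk$ is a field of characteristic $0$ and $H=\Bbbk[D]$. A conformal algebra is a unital left $H$-module $C$ with bilinear operations $a_{(n)}b$ ($n\ge0$) such that $a_{(n)}b=0$ for $n\gg0$, $(Da)_{(n)}b=-na_{(n-1)}b$, $a_{(n)}(Db)=D(a_{(n)}b)+na_{(n-1)}b$. Its coefficient algebra is $\operatorname{Coeff}C=\Bbbk[t,t^{-1}]\otimes_HC$, where $\Bbbk[t,t^{-1}]$ is a right $H$-module via $t^kD=-kt^{k-1}$; writing $a(k)=t^k\otimes_Ha$, the multiplication is $a(k)b(r)=\sum_{s\ge0}\binom ks(a_{(s)}b)(k+r-s)$. An algebra is Jordan if it is commutative and satisfies $((x x)y)x=(xx)(yx)$. Binomial coefficients $\binom ns$ with $s>n$ are zero. *)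

theory Defs
  imports Complex_Main
begin

text \<open>A conformal algebra over a field k of characteristic 0: a k-vector space C
(scalar multiplication sc), a linear map D (the action of H = k[D]), and
bilinear n-products pr n a b = a_(n) b, satisfying locality and sesquilinearity.\<close>

definition conformal_algebra ::
  "('k::field_char_0 \<Rightarrow> 'c::ab_group_add \<Rightarrow> 'c) \<Rightarrow> ('c \<Rightarrow> 'c) \<Rightarrow> (nat \<Rightarrow> 'c \<Rightarrow> 'c \<Rightarrow> 'c) \<Rightarrow> bool"
where
  "conformal_algebra sc D pr \<longleftrightarrow>
     vector_space sc \<and>
     Vector_Spaces.linear sc sc D \<and>
     (\<forall>n a. Vector_Spaces.linear sc sc (pr n a)) \<and>
     (\<forall>n b. Vector_Spaces.linear sc sc (\<lambda>a. pr n a b)) \<and>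
     (\<forall>a b. \<exists>N. \<forall>n\<ge>N. pr n a b = 0) \<and>
     (\<forall>n a b. pr n (D a) b = - sc (of_nat n) (pr (n - 1) a b)) \<and>
     (\<forall>n a b. pr n a (D b) = D (pr n a b) + sc (of_nat n) (pr (n - 1) a b))"

text \<open>Elements of k[t,t^-1] \<otimes>_k C are represented as finitely supported
functions f :: int \<Rightarrow> C, f = \<Sum>_k t^k \<otimes> f k.\<close>

definition fin_supp :: "(int \<Rightarrow> 'c::zero) \<Rightarrow> bool" where
  "fin_supp f \<longleftrightarrow> finite {k. f k \<noteq> 0}"

text \<open>Bilinear extension of a(k) b(r) = \<Sum>_s binom(k,s) (a_(s) b)(k+r-s).\<close>

definition coeff_mul ::
  "('k::field_char_0 \<Rightarrow> 'c::ab_group_add \<Rightarrow> 'c) \<Rightarrow> (nat \<Rightarrow> 'c \<Rightarrow> 'c \<Rightarrow> 'c)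
    \<Rightarrow> (int \<Rightarrow> 'c) \<Rightarrow> (int \<Rightarrow> 'c) \<Rightarrow> (int \<Rightarrow> 'c)"
where
  "coeff_mul sc pr f g = (\<lambda>j. \<Sum>k\<in>{k. f k \<noteq> 0}. \<Sum>r\<in>{r. g r \<noteq> 0}.
      if j \<le> k + r
      then sc ((of_int k :: 'k) gchoose nat (k + r - j)) (pr (nat (k + r - j)) (f k) (g r))
      else 0)"

text \<open>Generators of the kernel of k[t,t^-1] \<otimes>_k C \<rightarrow> k[t,t^-1] \<otimes>_H C:
t^k \<otimes> D a - (t^k D) \<otimes> a = (D a)(k) + k a(k-1).\<close>

definition coeff_gen ::
  "('k::field_char_0 \<Rightarrow> 'c::ab_group_add \<Rightarrow> 'c) \<Rightarrow> ('c \<Rightarrow> 'c) \<Rightarrow> 'c \<Rightarrow> int \<Rightarrow> (int \<Rightarrow> 'c)"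
where
  "coeff_gen sc D a k = (\<lambda>j. if j = k then D a else if j = k - 1 then sc (of_int k) a else 0)"

inductive_set coeff_rel ::
  "('k::field_char_0 \<Rightarrow> 'c::ab_group_add \<Rightarrow> 'c) \<Rightarrow> ('c \<Rightarrow> 'c) \<Rightarrow> (int \<Rightarrow> 'c) set"
  for sc D
where
  zero: "(\<lambda>_. 0) \<in> coeff_rel sc D"
| step: "f \<in> coeff_rel sc D \<Longrightarrow> (\<lambda>j. f j + coeff_gen sc D a k j) \<in> coeff_rel sc D"

text \<open>Coeff C = (k[t,t^-1] \<otimes>_k C) / coeff_rel; identities in Coeff C are
stated on representatives modulo coeff_rel.\<close>

definition coeff_commutative ::
  "('k::field_char_0 \<Rightarrow> 'c::ab_group_add \<Rightarrow> 'c) \<Rightarrow> ('c \<Rightarrow> 'c) \<Rightarrow> (nat \<Rightarrow> 'c \<Rightarrow> 'c \<Rightarrow> 'c) \<Rightarrow> bool"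
where
  "coeff_commutative sc D pr \<longleftrightarrow>
     (\<forall>f g. fin_supp f \<longrightarrow> fin_supp g \<longrightarrow>
        (\<lambda>j. coeff_mul sc pr f g j - coeff_mul sc pr g f j) \<in> coeff_rel sc D)"

definition coeff_jordan ::
  "('k::field_char_0 \<Rightarrow> 'c::ab_group_add \<Rightarrow> 'c) \<Rightarrow> ('c \<Rightarrow> 'c) \<Rightarrow> (nat \<Rightarrow> 'c \<Rightarrow> 'c \<Rightarrow> 'c) \<Rightarrow> bool"
where
  "coeff_jordan sc D pr \<longleftrightarrow> coeff_commutative sc D pr \<and>
     (\<forall>x y. fin_supp x \<longrightarrow> fin_supp y \<longrightarrow>
        (\<lambda>j. coeff_mul sc pr (coeff_mul sc pr (coeff_mul sc pr x x) y) x j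
             - coeff_mul sc pr (coeff_mul sc pr x x) (coeff_mul sc pr y x) j) \<in> coeff_rel sc D)"

end

theory Submission
  imports Defs "HOL-Computational_Algebra.Formal_Power_Series" "HOL-Library.Function_Algebras"
begin


locale CA =
  fixes sc :: "'k::field_char_0 \<Rightarrow> 'c::ab_group_add \<Rightarrow> 'c"
    and D :: "'c \<Rightarrow> 'c"
    and pr :: "nat \<Rightarrow> 'c \<Rightarrow> 'c \<Rightarrow> 'c"
  assumes ca: "conformal_algebra sc D pr"
begin

lemma vs: "vector_space sc" using ca unfolding conformal_algebra_def by blast

sublocale vector_space sc by (rule vs)

lemma linD: "Vector_Spaces.linear sc sc D" using ca unfolding conformal_algebra_def by blast
lemma linR: "Vector_Spaces.linear sc sc (pr n a)" using ca unfolding conformal_algebra_def by blast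
lemma linL: "Vector_Spaces.linear sc sc (\<lambda>a. pr n a b)" using ca unfolding conformal_algebra_def by blast
lemma locality: "\<exists>N. \<forall>n\<ge>N. pr n a b = 0" using ca unfolding conformal_algebra_def by blast
lemma sesqL: "pr n (D a) b = - sc (of_nat n) (pr (n - 1) a b)" using ca unfolding conformal_algebra_def by blast
lemma sesqR: "pr n a (D b) = D (pr n a b) + sc (of_nat n) (pr (n - 1) a b)" using ca unfolding conformal_algebra_def by blast

lemma lin_add: "Vector_Spaces.linear sc sc f \<Longrightarrow> f (x + y) = f x + f y"
  by (simp add: Vector_Spaces.linear_iff)
lemma lin_scale: "Vector_Spaces.linear sc sc f \<Longrightarrow> f (sc c x) = sc c (f x)"
  by (simp add: Vector_Spaces.linear_iff)
lemma lin_zero: assumes "Vector_Spaces.linear sc sc f" shows "f 0 = 0"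
proof -
  have "f (0 + 0) = f 0 + f 0" by (rule lin_add[OF assms])
  then show ?thesis by simp
qed
lemma lin_neg: assumes "Vector_Spaces.linear sc sc f" shows "f (- x) = - f x"
proof -
  have "f (x + - x) = f x + f (- x)" by (rule lin_add[OF assms])
  then have "f x + f (- x) = 0" using lin_zero[OF assms] by simp
  then show ?thesis by (simp add: eq_neg_iff_add_eq_0 add.commute)
qed
lemma lin_diff: assumes "Vector_Spaces.linear sc sc f" shows "f (x - y) = f x - f y"
proof -
  have "f (x + - y) = f x + f (- y)" by (rule lin_add[OF assms])
  then show ?thesis using lin_neg[OF assms, of y] by simp
qed
lemma lin_sum: assumes "Vector_Spaces.linear sc sc f" shows "f (sum g A) = (\<Sum>a\<in>A. f (g a))"
proof (induct A rule: infinite_finite_induct)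
  case (insert x F)
  then show ?case using lin_add[OF assms, of "g x" "sum g F"] by simp
qed (auto simp: lin_zero[OF assms])

lemma prR_add: "pr n a (x + y) = pr n a x + pr n a y" using lin_add[OF linR[of n a], of x y] .
lemma prR_scale: "pr n a (sc c x) = sc c (pr n a x)" using lin_scale[OF linR[of n a], of c x] .
lemma prR_zero: "pr n a 0 = 0" using lin_zero[OF linR[of n a]] .
lemma prR_neg: "pr n a (- x) = - pr n a x" using lin_neg[OF linR[of n a], of x] .
lemma prR_diff: "pr n a (x - y) = pr n a x - pr n a y" using lin_diff[OF linR[of n a], of x y] .
lemma prR_sum: "pr n a (sum g A) = (\<Sum>i\<in>A. pr n a (g i))" using lin_sum[OF linR[of n a], of g A] .
lemma prL_add: "pr n (x + y) b = pr n x b + pr n y b" using lin_add[OF linL[of n b], of x y] by simp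
lemma prL_scale: "pr n (sc c x) b = sc c (pr n x b)" using lin_scale[OF linL[of n b], of c x] by simp
lemma prL_zero: "pr n 0 b = 0" using lin_zero[OF linL[of n b]] by simp
lemma prL_neg: "pr n (- x) b = - pr n x b" using lin_neg[OF linL[of n b], of x] by simp
lemma prL_diff: "pr n (x - y) b = pr n x b - pr n y b" using lin_diff[OF linL[of n b], of x y] by simp
lemma prL_sum: "pr n (sum g A) b = (\<Sum>i\<in>A. pr n (g i) b)" using lin_sum[OF linL[of n b], of g A] by simp
lemma D_add: "D (x + y) = D x + D y" using lin_add[OF linD] .
lemma D_scale: "D (sc c x) = sc c (D x)" using lin_scale[OF linD] .
lemma D_zero: "D 0 = 0" using lin_zero[OF linD] .
lemma D_neg: "D (- x) = - D x" using lin_neg[OF linD] .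
lemma D_sum: "D (sum g A) = (\<Sum>i\<in>A. D (g i))" using lin_sum[OF linD] .

lemmas pr_simps = prR_add prR_scale prR_zero prR_neg prR_diff prR_sum
   prL_add prL_scale prL_zero prL_neg prL_diff prL_sum


abbreviation mul where "mul \<equiv> coeff_mul sc pr"
abbreviation RR where "RR \<equiv> coeff_rel sc D"

definition cmt :: "(int \<Rightarrow> 'c) \<Rightarrow> (int \<Rightarrow> 'c) \<Rightarrow> int \<Rightarrow> int \<Rightarrow> int \<Rightarrow> 'c" where
  "cmt f g j k r = (if j \<le> k + r
      then sc ((of_int k :: 'k) gchoose nat (k + r - j)) (pr (nat (k + r - j)) (f k) (g r)) else 0)"

lemma mul_def': "mul f g j = (\<Sum>k\<in>{k. f k \<noteq> 0}. \<Sum>r\<in>{r. g r \<noteq> 0}. cmt f g j k r)"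
  unfolding coeff_mul_def cmt_def by simp

lemma cmt_nz: "cmt f g j k r \<noteq> 0 \<Longrightarrow> f k \<noteq> 0 \<and> g r \<noteq> 0 \<and> j \<le> k + r"
proof -
  assume h: "cmt f g j k r \<noteq> 0"
  show ?thesis
  proof (intro conjI)
    show "f k \<noteq> 0"
    proof
      assume "f k = 0"
      then have "pr m (f k) (g r) = 0" for m by (simp add: prL_zero)
      then show False using h unfolding cmt_def by (auto split: if_splits)
    qed
    show "g r \<noteq> 0"
    proof
      assume "g r = 0"
      then have "pr m (f k) (g r) = 0" for m by (simp add: prR_zero)
      then show False using h unfolding cmt_def by (auto split: if_splits)
    qed
    show "j \<le> k + r" using h unfolding cmt_def by (auto split: if_splits)
  qed
qed

lemma mul_expand:
  assumes "fin_supp f" "fin_supp g" "finite A" "finite B"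
    and "\<And>k r. f k \<noteq> 0 \<Longrightarrow> g r \<noteq> 0 \<Longrightarrow> j \<le> k + r \<Longrightarrow> k \<in> A \<and> r \<in> B"
  shows "mul f g j = (\<Sum>k\<in>A. \<Sum>r\<in>B. cmt f g j k r)"
proof -
  let ?Sf = "{k. f k \<noteq> 0}" and ?Sg = "{r. g r \<noteq> 0}"
  have fS: "finite ?Sf" "finite ?Sg" using assms(1,2) unfolding fin_supp_def by auto
  have z: "cmt f g j k r = 0" if "\<not> (k \<in> A \<inter> ?Sf \<and> r \<in> B \<inter> ?Sg)" for k r
    using that cmt_nz[of f g j k r] assms(5)[of k r] by blast
  have "mul f g j = (\<Sum>k\<in>?Sf. \<Sum>r\<in>?Sg. cmt f g j k r)" by (rule mul_def')
  also have "\<dots> = (\<Sum>k\<in>A \<union> ?Sf. \<Sum>r\<in>?Sg. cmt f g j k r)"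
    by (rule sum.mono_neutral_left) (use fS assms(3) z in auto)
  also have "\<dots> = (\<Sum>k\<in>A \<union> ?Sf. \<Sum>r\<in>B \<union> ?Sg. cmt f g j k r)"
    by (intro sum.cong refl sum.mono_neutral_left) (use fS assms(4) z in auto)
  also have "\<dots> = (\<Sum>k\<in>A \<union> ?Sf. \<Sum>r\<in>B. cmt f g j k r)"
    by (intro sum.cong refl sum.mono_neutral_right) (use fS assms(4) z in auto)
  also have "\<dots> = (\<Sum>k\<in>A. \<Sum>r\<in>B. cmt f g j k r)"
    by (rule sum.mono_neutral_right) (use fS assms(3) z in auto)
  finally show ?thesis .
qed

definition shape :: "int \<Rightarrow> (nat \<Rightarrow> 'c) \<Rightarrow> int \<Rightarrow> 'c" where
  "shape T q = (\<lambda>j. if j \<le> T then q (nat (T - j)) else 0)"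

lemma fin_supp_shape: assumes "finite {w. q w \<noteq> 0}" shows "fin_supp (shape T q)"
proof -
  have "{j. shape T q j \<noteq> 0} \<subseteq> (\<lambda>w. T - int w) ` {w. q w \<noteq> 0}"
  proof
    fix j assume "j \<in> {j. shape T q j \<noteq> 0}"
    then have "j \<le> T" "q (nat (T - j)) \<noteq> 0" unfolding shape_def by (auto split: if_splits)
    then show "j \<in> (\<lambda>w. T - int w) ` {w. q w \<noteq> 0}"
      by (intro image_eqI[of _ _ "nat (T - j)"]) auto
  qed
  then show ?thesis unfolding fin_supp_def using assms finite_subset by blast
qed

lemma mul_shape:
  assumes "fin_supp (shape T1 x)" "fin_supp (shape T2 y)"
  shows "mul (shape T1 x) (shape T2 y) = shape (T1 + T2)
     (\<lambda>w. \<Sum>v1\<le>w. \<Sum>v2\<le>w - v1. sc ((of_int (T1 - int v1) :: 'k) gchoose (w - v1 - v2))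
            (pr (w - v1 - v2) (x v1) (y v2)))"
  (is "_ = shape _ ?F")
proof
  fix j
  show "mul (shape T1 x) (shape T2 y) j = shape (T1 + T2) ?F j"
  proof (cases "j \<le> T1 + T2")
    case False
    have "mul (shape T1 x) (shape T2 y) j = (\<Sum>k\<in>{}. \<Sum>r\<in>{}. cmt (shape T1 x) (shape T2 y) j k r)"
      by (rule mul_expand) (use assms False in \<open>auto simp: shape_def split: if_splits\<close>)
    then show ?thesis using False by (simp add: shape_def)
  next
    case True
    define w where "w = nat (T1 + T2 - j)"
    have jw: "j = T1 + T2 - int w" using True unfolding w_def by simp
    let ?A = "(\<lambda>v. T1 - int v) ` {..w}" and ?B = "(\<lambda>v. T2 - int v) ` {..w}"
    have "mul (shape T1 x) (shape T2 y) j = (\<Sum>k\<in>?A. \<Sum>r\<in>?B. cmt (shape T1 x) (shape T2 y) j k r)"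
    proof (rule mul_expand)
      fix k r assume h: "shape T1 x k \<noteq> 0" "shape T2 y r \<noteq> 0" "j \<le> k + r"
      then have "k \<le> T1" "r \<le> T2" unfolding shape_def by (auto split: if_splits)
      then show "k \<in> ?A \<and> r \<in> ?B" using h(3) jw
        by (auto intro!: image_eqI[of k _ "nat (T1 - k)"] image_eqI[of r _ "nat (T2 - r)"])
    qed (use assms in auto)
    also have "\<dots> = (\<Sum>v1\<le>w. \<Sum>v2\<le>w. cmt (shape T1 x) (shape T2 y) j (T1 - int v1) (T2 - int v2))"
      by (simp add: sum.reindex inj_on_def)
    also have "\<dots> = (\<Sum>v1\<le>w. \<Sum>v2\<le>w - v1. sc ((of_int (T1 - int v1) :: 'k) gchoose (w - v1 - v2))
            (pr (w - v1 - v2) (x v1) (y v2)))"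
    proof (rule sum.cong[OF refl])
      fix v1 assume v1: "v1 \<in> {..w}"
      have "(\<Sum>v2\<le>w. cmt (shape T1 x) (shape T2 y) j (T1 - int v1) (T2 - int v2))
          = (\<Sum>v2\<in>{..w - v1} \<union> {w - v1<..w}. cmt (shape T1 x) (shape T2 y) j (T1 - int v1) (T2 - int v2))"
        by (rule sum.cong) auto
      also have "\<dots> = (\<Sum>v2\<le>w - v1. cmt (shape T1 x) (shape T2 y) j (T1 - int v1) (T2 - int v2))"
        by (subst sum.union_disjoint) (auto simp: cmt_def jw intro!: sum.neutral)
      also have "\<dots> = (\<Sum>v2\<le>w - v1. sc ((of_int (T1 - int v1) :: 'k) gchoose (w - v1 - v2))
            (pr (w - v1 - v2) (x v1) (y v2)))"
      proof (rule sum.cong[OF refl])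
        fix v2 assume "v2 \<in> {..w - v1}"
        then have "v1 + v2 \<le> w" using v1 by auto
        then have e: "nat (T1 - int v1 + (T2 - int v2) - j) = w - v1 - v2" using jw by auto
        show "cmt (shape T1 x) (shape T2 y) j (T1 - int v1) (T2 - int v2) = sc ((of_int (T1 - int v1) :: 'k) gchoose (w - v1 - v2))
            (pr (w - v1 - v2) (x v1) (y v2))"
          unfolding cmt_def e using \<open>v1 + v2 \<le> w\<close> jw by (simp add: shape_def)
      qed
      finally show "(\<Sum>v2\<le>w. cmt (shape T1 x) (shape T2 y) j (T1 - int v1) (T2 - int v2)) = \<dots>" .
    qed
    finally show ?thesis using True unfolding shape_def w_def by simp
  qed
qed


definition Nloc :: "'c \<Rightarrow> 'c \<Rightarrow> nat" where
  "Nloc a b = (SOME N. \<forall>n\<ge>N. pr n a b = 0)"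

lemma Nloc: "n \<ge> Nloc a b \<Longrightarrow> pr n a b = 0"
  using someI_ex[OF locality[of a b]] unfolding Nloc_def by blast

lemma fin_supp_mul:
  assumes f: "fin_supp f" and g: "fin_supp g"
  shows "fin_supp (mul f g)"
proof -
  let ?Sf = "{k. f k \<noteq> 0}" and ?Sg = "{r. g r \<noteq> 0}"
  have fS: "finite ?Sf" "finite ?Sg" using f g unfolding fin_supp_def by auto
  have "{j. mul f g j \<noteq> 0} \<subseteq> (\<Union>p\<in>?Sf \<times> ?Sg. {fst p + snd p - int (Nloc (f (fst p)) (g (snd p))) .. fst p + snd p})"
  proof
    fix j assume "j \<in> {j. mul f g j \<noteq> 0}"
    then have "(\<Sum>k\<in>?Sf. \<Sum>r\<in>?Sg. cmt f g j k r) \<noteq> 0" by (simp add: mul_def')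
    then obtain k where k: "k \<in> ?Sf" "(\<Sum>r\<in>?Sg. cmt f g j k r) \<noteq> 0"
      using sum.not_neutral_contains_not_neutral by blast
    then obtain r where r: "r \<in> ?Sg" "cmt f g j k r \<noteq> 0"
      using sum.not_neutral_contains_not_neutral by blast
    then have jkr: "j \<le> k + r" using cmt_nz by blast
    have "pr (nat (k + r - j)) (f k) (g r) \<noteq> 0" using r(2) jkr unfolding cmt_def by auto
    then have "nat (k + r - j) < Nloc (f k) (g r)" using Nloc by (meson not_le)
    then have "k + r - int (Nloc (f k) (g r)) \<le> j" by linarith
    then show "j \<in> (\<Union>p\<in>?Sf \<times> ?Sg. {fst p + snd p - int (Nloc (f (fst p)) (g (snd p))) .. fst p + snd p})"
      using k(1) r(1) jkr by (intro UN_I[of "(k, r)"]) auto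
  qed
  moreover have "finite (\<Union>p\<in>?Sf \<times> ?Sg. {fst p + snd p - int (Nloc (f (fst p)) (g (snd p))) .. fst p + snd p})"
    using fS by auto
  ultimately show ?thesis unfolding fin_supp_def using finite_subset by blast
qed

definition dl :: "'c \<Rightarrow> nat \<Rightarrow> 'c" where "dl a = (\<lambda>w. if w = 0 then a else 0)"

abbreviation sg where "sg a k \<equiv> shape k (dl a)"

lemma fin_supp_sg: "fin_supp (sg a k)"
  by (rule fin_supp_shape) (auto simp: dl_def)

lemma mul_s_shape:
  assumes "fin_supp (shape T y)"
  shows "mul (sg a n) (shape T y) = shape (n + T) (\<lambda>w. \<Sum>v\<le>w. sc ((of_int n :: 'k) gchoose (w - v)) (pr (w - v) a (y v)))"
proof -
  have "mul (sg a n) (shape T y) = shape (n + T)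
     (\<lambda>w. \<Sum>v1\<le>w. \<Sum>v2\<le>w - v1. sc ((of_int (n - int v1) :: 'k) gchoose (w - v1 - v2))
            (pr (w - v1 - v2) (dl a v1) (y v2)))"
    by (rule mul_shape[OF fin_supp_sg assms])
  also have "\<dots> = shape (n + T) (\<lambda>w. \<Sum>v\<le>w. sc ((of_int n :: 'k) gchoose (w - v)) (pr (w - v) a (y v)))"
  proof -
    have "(\<Sum>v1\<le>w. \<Sum>v2\<le>w - v1. sc ((of_int (n - int v1) :: 'k) gchoose (w - v1 - v2))
            (pr (w - v1 - v2) (dl a v1) (y v2))) = (\<Sum>v\<le>w. sc ((of_int n :: 'k) gchoose (w - v)) (pr (w - v) a (y v)))" for w
    proof -
      have "(\<Sum>v1\<le>w. \<Sum>v2\<le>w - v1. sc ((of_int (n - int v1) :: 'k) gchoose (w - v1 - v2))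
            (pr (w - v1 - v2) (dl a v1) (y v2))) = (\<Sum>v1\<in>{0}. \<Sum>v2\<le>w - v1. sc ((of_int (n - int v1) :: 'k) gchoose (w - v1 - v2))
            (pr (w - v1 - v2) (dl a v1) (y v2)))"
        by (intro sum.mono_neutral_right sum.neutral ballI) (auto simp: dl_def prL_zero)
      then show ?thesis by (simp add: dl_def)
    qed
    then show ?thesis by simp
  qed
  finally show ?thesis .
qed

lemma mul_ss: "mul (sg a k) (sg b r) = shape (k + r) (\<lambda>w. sc ((of_int k :: 'k) gchoose w) (pr w a b))"
proof -
  have "mul (sg a k) (sg b r) = shape (k + r) (\<lambda>w. \<Sum>v\<le>w. sc ((of_int k :: 'k) gchoose (w - v)) (pr (w - v) a (dl b v)))"
    by (rule mul_s_shape[OF fin_supp_sg])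
  also have "\<dots> = shape (k + r) (\<lambda>w. sc ((of_int k :: 'k) gchoose w) (pr w a b))"
  proof -
    have "(\<Sum>v\<le>w. sc ((of_int k :: 'k) gchoose (w - v)) (pr (w - v) a (dl b v))) = 
       (\<Sum>v\<in>{0}. sc ((of_int k :: 'k) gchoose (w - v)) (pr (w - v) a (dl b v)))" for w
      by (intro sum.mono_neutral_right ballI) (auto simp: dl_def prR_zero)
    then show ?thesis by (simp add: dl_def)
  qed
  finally show ?thesis .
qed

lemma mul_shape_s:
  assumes "fin_supp (shape T x)"
  shows "mul (shape T x) (sg d k) = shape (T + k) (\<lambda>w. \<Sum>v\<le>w. sc ((of_int (T - int v) :: 'k) gchoose (w - v)) (pr (w - v) (x v) d))"
proof -
  have "mul (shape T x) (sg d k) = shape (T + k)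
     (\<lambda>w. \<Sum>v1\<le>w. \<Sum>v2\<le>w - v1. sc ((of_int (T - int v1) :: 'k) gchoose (w - v1 - v2))
            (pr (w - v1 - v2) (x v1) (dl d v2)))"
    by (rule mul_shape[OF assms fin_supp_sg])
  also have "\<dots> = shape (T + k) (\<lambda>w. \<Sum>v\<le>w. sc ((of_int (T - int v) :: 'k) gchoose (w - v)) (pr (w - v) (x v) d))"
  proof -
    have "(\<Sum>v1\<le>w. \<Sum>v2\<le>w - v1. sc ((of_int (T - int v1) :: 'k) gchoose (w - v1 - v2))
            (pr (w - v1 - v2) (x v1) (dl d v2))) = (\<Sum>v\<le>w. sc ((of_int (T - int v) :: 'k) gchoose (w - v)) (pr (w - v) (x v) d))" for w
    proof (rule sum.cong[OF refl])
      fix v1 assume "v1 \<in> {..w}"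
      have "(\<Sum>v2\<le>w - v1. sc ((of_int (T - int v1) :: 'k) gchoose (w - v1 - v2))
            (pr (w - v1 - v2) (x v1) (dl d v2))) = (\<Sum>v2\<in>{0}. sc ((of_int (T - int v1) :: 'k) gchoose (w - v1 - v2))
            (pr (w - v1 - v2) (x v1) (dl d v2)))"
        by (intro sum.mono_neutral_right ballI) (auto simp: dl_def prR_zero)
      then show "(\<Sum>v2\<le>w - v1. sc ((of_int (T - int v1) :: 'k) gchoose (w - v1 - v2))
            (pr (w - v1 - v2) (x v1) (dl d v2))) = sc ((of_int (T - int v1) :: 'k) gchoose (w - v1)) (pr (w - v1) (x v1) d)"
        by (simp add: dl_def)
    qed
    then show ?thesis by simp
  qed
  finally show ?thesis .
qed


definition scf :: "'k \<Rightarrow> (int \<Rightarrow> 'c) \<Rightarrow> int \<Rightarrow> 'c" where "scf c f = (\<lambda>j. sc c (f j))"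

lemma fin_supp_add: "fin_supp (f :: int \<Rightarrow> 'c) \<Longrightarrow> fin_supp g \<Longrightarrow> fin_supp (f + g)"
  unfolding fin_supp_def by (rule finite_subset[of _ "{k. f k \<noteq> 0} \<union> {k. g k \<noteq> 0}"]) auto
lemma fin_supp_neg: "fin_supp (f :: int \<Rightarrow> 'c) \<Longrightarrow> fin_supp (- f)"
  unfolding fin_supp_def by simp
lemma fin_supp_diff: "fin_supp (f :: int \<Rightarrow> 'c) \<Longrightarrow> fin_supp g \<Longrightarrow> fin_supp (f - g)"
  unfolding fin_supp_def by (rule finite_subset[of _ "{k. f k \<noteq> 0} \<union> {k. g k \<noteq> 0}"]) auto
lemma fin_supp_scf: "fin_supp f \<Longrightarrow> fin_supp (scf c f)"
  unfolding fin_supp_def scf_def by (rule finite_subset[of _ "{k. f k \<noteq> 0}"]) auto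
lemma fin_supp_zero: "fin_supp (0 :: int \<Rightarrow> 'c)"
  unfolding fin_supp_def by simp
lemma fin_supp_sum: "(\<And>i. i \<in> I \<Longrightarrow> fin_supp (F i :: int \<Rightarrow> 'c)) \<Longrightarrow> fin_supp (sum F I)"
  by (induct I rule: infinite_finite_induct) (auto simp: fin_supp_zero fin_supp_add)

lemmas fs_intros = fin_supp_add fin_supp_neg fin_supp_diff fin_supp_scf fin_supp_zero fin_supp_sum
  fin_supp_mul fin_supp_sg

lemma cmt_add_left: "cmt (f + g) h j k r = cmt f h j k r + cmt g h j k r"
  unfolding cmt_def by (simp add: prL_add scale_right_distrib)
lemma cmt_add_right: "cmt h (f + g) j k r = cmt h f j k r + cmt h g j k r"
  unfolding cmt_def by (simp add: prR_add scale_right_distrib)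
lemma cmt_scf_left: "cmt (scf c f) h j k r = sc c (cmt f h j k r)"
  unfolding cmt_def scf_def by (simp add: prL_scale scale_left_commute)
lemma cmt_scf_right: "cmt h (scf c f) j k r = sc c (cmt h f j k r)"
  unfolding cmt_def scf_def by (simp add: prR_scale scale_left_commute)
lemma cmt_neg_left: "cmt (- f) h j k r = - cmt f h j k r"
  unfolding cmt_def by (simp add: prL_neg)
lemma cmt_neg_right: "cmt h (- f) j k r = - cmt h f j k r"
  unfolding cmt_def by (simp add: prR_neg)

lemma mul_add_left:
  assumes "fin_supp f" "fin_supp g" "fin_supp h"
  shows "mul (f + g) h = mul f h + mul g h"
proof
  fix j
  let ?A = "{k. f k \<noteq> 0} \<union> {k. g k \<noteq> 0}" and ?B = "{r. h r \<noteq> 0}"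
  have fin: "finite ?A" "finite ?B" using assms unfolding fin_supp_def by auto
  have "mul (f + g) h j = (\<Sum>k\<in>?A. \<Sum>r\<in>?B. cmt (f + g) h j k r)"
    by (rule mul_expand) (use assms fin fin_supp_add in auto)
  moreover have "mul f h j = (\<Sum>k\<in>?A. \<Sum>r\<in>?B. cmt f h j k r)"
    by (rule mul_expand) (use assms fin in auto)
  moreover have "mul g h j = (\<Sum>k\<in>?A. \<Sum>r\<in>?B. cmt g h j k r)"
    by (rule mul_expand) (use assms fin in auto)
  ultimately show "mul (f + g) h j = (mul f h + mul g h) j"
    by (simp add: cmt_add_left sum.distrib)
qed

lemma mul_add_right:
  assumes "fin_supp f" "fin_supp g" "fin_supp h"
  shows "mul h (f + g) = mul h f + mul h g"
proof
  fix j
  let ?B = "{k. f k \<noteq> 0} \<union> {k. g k \<noteq> 0}" and ?A = "{r. h r \<noteq> 0}"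
  have fin: "finite ?A" "finite ?B" using assms unfolding fin_supp_def by auto
  have "mul h (f + g) j = (\<Sum>k\<in>?A. \<Sum>r\<in>?B. cmt h (f + g) j k r)"
    by (rule mul_expand) (use assms fin fin_supp_add in auto)
  moreover have "mul h f j = (\<Sum>k\<in>?A. \<Sum>r\<in>?B. cmt h f j k r)"
    by (rule mul_expand) (use assms fin in auto)
  moreover have "mul h g j = (\<Sum>k\<in>?A. \<Sum>r\<in>?B. cmt h g j k r)"
    by (rule mul_expand) (use assms fin in auto)
  ultimately show "mul h (f + g) j = (mul h f + mul h g) j"
    by (simp add: cmt_add_right sum.distrib)
qed

lemma mul_scf_left:
  assumes "fin_supp f" "fin_supp h"
  shows "mul (scf c f) h = scf c (mul f h)"
proof
  fix j
  let ?A = "{k. f k \<noteq> 0}" and ?B = "{r. h r \<noteq> 0}"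
  have fin: "finite ?A" "finite ?B" using assms unfolding fin_supp_def by auto
  have "mul (scf c f) h j = (\<Sum>k\<in>?A. \<Sum>r\<in>?B. cmt (scf c f) h j k r)"
    by (rule mul_expand) (use assms fin fin_supp_scf in \<open>auto simp: scf_def\<close>)
  moreover have "mul f h j = (\<Sum>k\<in>?A. \<Sum>r\<in>?B. cmt f h j k r)"
    by (rule mul_expand) (use assms fin in auto)
  moreover have "scf c (mul f h) j = sc c (mul f h j)" by (simp add: scf_def)
  ultimately show "mul (scf c f) h j = scf c (mul f h) j"
    by (simp add: cmt_scf_left scale_sum_right)
qed

lemma mul_scf_right:
  assumes "fin_supp f" "fin_supp h"
  shows "mul h (scf c f) = scf c (mul h f)"
proof
  fix j
  let ?B = "{k. f k \<noteq> 0}" and ?A = "{r. h r \<noteq> 0}"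
  have fin: "finite ?A" "finite ?B" using assms unfolding fin_supp_def by auto
  have "mul h (scf c f) j = (\<Sum>k\<in>?A. \<Sum>r\<in>?B. cmt h (scf c f) j k r)"
    by (rule mul_expand) (use assms fin fin_supp_scf in \<open>auto simp: scf_def\<close>)
  moreover have "mul h f j = (\<Sum>k\<in>?A. \<Sum>r\<in>?B. cmt h f j k r)"
    by (rule mul_expand) (use assms fin in auto)
  moreover have "scf c (mul h f) j = sc c (mul h f j)" by (simp add: scf_def)
  ultimately show "mul h (scf c f) j = scf c (mul h f) j"
    by (simp add: cmt_scf_right scale_sum_right)
qed

lemma mul_neg_left:
  assumes "fin_supp f" "fin_supp h"
  shows "mul (- f) h = - mul f h"
proof
  fix j
  let ?A = "{k. f k \<noteq> 0}" and ?B = "{r. h r \<noteq> 0}"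
  have fin: "finite ?A" "finite ?B" using assms unfolding fin_supp_def by auto
  have "mul (- f) h j = (\<Sum>k\<in>?A. \<Sum>r\<in>?B. cmt (- f) h j k r)"
    by (rule mul_expand) (use assms fin fin_supp_neg in auto)
  moreover have "mul f h j = (\<Sum>k\<in>?A. \<Sum>r\<in>?B. cmt f h j k r)"
    by (rule mul_expand) (use assms fin in auto)
  ultimately show "mul (- f) h j = (- mul f h) j"
    by (simp add: cmt_neg_left sum_negf)
qed

lemma mul_neg_right:
  assumes "fin_supp f" "fin_supp h"
  shows "mul h (- f) = - mul h f"
proof
  fix j
  let ?B = "{k. f k \<noteq> 0}" and ?A = "{r. h r \<noteq> 0}"
  have fin: "finite ?A" "finite ?B" using assms unfolding fin_supp_def by auto
  have "mul h (- f) j = (\<Sum>k\<in>?A. \<Sum>r\<in>?B. cmt h (- f) j k r)"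
    by (rule mul_expand) (use assms fin fin_supp_neg in auto)
  moreover have "mul h f j = (\<Sum>k\<in>?A. \<Sum>r\<in>?B. cmt h f j k r)"
    by (rule mul_expand) (use assms fin in auto)
  ultimately show "mul h (- f) j = (- mul h f) j"
    by (simp add: cmt_neg_right sum_negf)
qed

lemma mul_diff_left:
  assumes "fin_supp f" "fin_supp g" "fin_supp h"
  shows "mul (f - g) h = mul f h - mul g h"
  using mul_add_left[of f "- g" h] mul_neg_left[of g h] assms
  by (simp add: fin_supp_neg)

lemma mul_diff_right:
  assumes "fin_supp f" "fin_supp g" "fin_supp h"
  shows "mul h (f - g) = mul h f - mul h g"
  using mul_add_right[of f "- g" h] mul_neg_right[of g h] assms
  by (simp add: fin_supp_neg)

lemma mul_zero_left: "mul 0 h = 0"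
  unfolding coeff_mul_def by (rule ext) simp
lemma mul_zero_right: "mul h 0 = 0"
  unfolding coeff_mul_def by (rule ext) simp

lemma mul_sum_left:
  assumes "\<And>i. i \<in> I \<Longrightarrow> fin_supp (F i)" "fin_supp h"
  shows "mul (sum F I) h = (\<Sum>i\<in>I. mul (F i) h)"
  using assms
proof (induct I rule: infinite_finite_induct)
  case (insert x J)
  have "mul (sum F (insert x J)) h = mul (F x + sum F J) h" by (simp only: sum.insert[OF insert(1,2)])
  also have "\<dots> = mul (F x) h + mul (sum F J) h" by (rule mul_add_left) (use insert in \<open>auto intro: fin_supp_sum\<close>)
  also have "\<dots> = mul (F x) h + (\<Sum>i\<in>J. mul (F i) h)" using insert by simp
  finally show ?case by (simp only: sum.insert[OF insert(1,2)])
qed (auto simp: mul_zero_left)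

lemma mul_sum_right:
  assumes "\<And>i. i \<in> I \<Longrightarrow> fin_supp (F i)" "fin_supp h"
  shows "mul h (sum F I) = (\<Sum>i\<in>I. mul h (F i))"
  using assms
proof (induct I rule: infinite_finite_induct)
  case (insert x J)
  have "mul h (sum F (insert x J)) = mul h (F x + sum F J)" by (simp only: sum.insert[OF insert(1,2)])
  also have "\<dots> = mul h (F x) + mul h (sum F J)" by (rule mul_add_right) (use insert in \<open>auto intro: fin_supp_sum\<close>)
  also have "\<dots> = mul h (F x) + (\<Sum>i\<in>J. mul h (F i))" using insert by simp
  finally show ?case by (simp only: sum.insert[OF insert(1,2)])
qed (auto simp: mul_zero_right)


lemma shape_apply: "shape T q j = (if j \<le> T then q (nat (T - j)) else 0)"
  by (simp add: shape_def)

lemma shape_add: "shape T p + shape T q = shape T (\<lambda>w. p w + q w)"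
  by (rule ext) (simp add: shape_def)
lemma shape_diff: "shape T p - shape T q = shape T (\<lambda>w. p w - q w)"
  by (rule ext) (simp add: shape_def)
lemma shape_zero: "shape T (\<lambda>w. 0) = 0"
  by (rule ext) (simp add: shape_def)
lemma shape_cong: "(\<And>w. p w = q w) \<Longrightarrow> shape T p = shape T q"
  by (rule ext) (simp add: shape_def)
lemma sg_apply: "sg a k j = (if j = k then a else 0)"
  by (simp add: shape_def dl_def)

lemma sum_fun_apply: "(sum F I) j = (\<Sum>i\<in>I. (F i :: int \<Rightarrow> 'c) j)"
  by (induct I rule: infinite_finite_induct) auto

lemma fin_supp_decomp:
  assumes "fin_supp g"
  shows "g = (\<Sum>k\<in>{k. g k \<noteq> 0}. sg (g k) k)"
proof
  fix j
  have fin: "finite {k. g k \<noteq> 0}" using assms unfolding fin_supp_def .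
  have "(\<Sum>k\<in>{k. g k \<noteq> 0}. sg (g k) k) j = (\<Sum>k\<in>{k. g k \<noteq> 0}. sg (g k) k j)"
    by (rule sum_fun_apply)
  also have "\<dots> = (\<Sum>k\<in>{k. g k \<noteq> 0}. if j = k then g k else 0)"
    by (simp add: sg_apply)
  also have "\<dots> = g j" using fin by (simp add: sum.delta')
  finally show "g j = (\<Sum>k\<in>{k. g k \<noteq> 0}. sg (g k) k) j" by simp
qed


definition dd :: "(int \<Rightarrow> 'c) \<Rightarrow> int \<Rightarrow> 'c" where
  "dd f = (\<lambda>j. D (f j) + sc (of_int (j + 1)) (f (j + 1)))"

lemma dd_add: "dd (f + g) = dd f + dd g"
  by (rule ext) (simp add: dd_def D_add scale_right_distrib)
lemma dd_zero: "dd 0 = 0"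
  by (rule ext) (simp add: dd_def D_zero)
lemma dd_neg: "dd (- f) = - dd f"
  by (rule ext) (simp add: dd_def D_neg)
lemma dd_diff: "dd (f - g) = dd f - dd g"
  by (simp only: diff_conv_add_uminus dd_add dd_neg)

lemma dd_scf: "dd (scf c f) = scf c (dd f)"
  by (rule ext) (simp add: dd_def scf_def D_scale scale_right_distrib scale_left_commute)
lemma dd_sum: "dd (sum F I) = (\<Sum>i\<in>I. dd (F i))"
proof (induct I rule: infinite_finite_induct)
  case (insert x J)
  have "dd (sum F (insert x J)) = dd (F x + sum F J)" by (simp only: sum.insert[OF insert(1,2)])
  also have "\<dots> = dd (F x) + dd (sum F J)" by (rule dd_add)
  finally show ?case by (simp only: sum.insert[OF insert(1,2)] insert(3))
next
  case (infinite A)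
  show ?case by (simp only: sum.infinite[OF infinite] dd_zero)
qed (simp only: sum.empty dd_zero)

lemma gen_dd: "coeff_gen sc D a k = dd (sg a k)"
  by (rule ext) (auto simp: coeff_gen_def dd_def sg_apply D_zero)

lemma fin_supp_dd: assumes "fin_supp f" shows "fin_supp (dd f)"
proof -
  have "{j. dd f j \<noteq> 0} \<subseteq> {k. f k \<noteq> 0} \<union> (\<lambda>k. k - 1) ` {k. f k \<noteq> 0}"
  proof
    fix j assume "j \<in> {j. dd f j \<noteq> 0}"
    then have "f j \<noteq> 0 \<or> f (j + 1) \<noteq> 0" by (auto simp: dd_def D_zero)
    then show "j \<in> {k. f k \<noteq> 0} \<union> (\<lambda>k. k - 1) ` {k. f k \<noteq> 0}"
      by (auto intro!: image_eqI[of j _ "j + 1"])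
  qed
  then show ?thesis using assms unfolding fin_supp_def using finite_subset by blast
qed


end

context CA begin

lemma shape_shift: "shape (T - 1) q = shape T (\<lambda>w. if w = 0 then 0 else q (w - 1))"
proof
  fix j show "shape (T - 1) q j = shape T (\<lambda>w. if w = 0 then 0 else q (w - 1)) j"
  proof (cases "j \<le> T - 1")
    case True
    then have "nat (T - j) = Suc (nat (T - 1 - j))" by arith
    then show ?thesis using True by (simp add: shape_def)
  next
    case False
    then show ?thesis by (cases "j = T") (auto simp: shape_def)
  qed
qed

lemma dd_shape: "dd (shape T q) = shape T (\<lambda>w. D (q w) + (if w = 0 then 0 else sc (of_int (T - int w + 1)) (q (w - 1))))"
proof
  fix j
  show "dd (shape T q) j = shape T (\<lambda>w. D (q w) + (if w = 0 then 0 else sc (of_int (T - int w + 1)) (q (w - 1)))) j"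
  proof (cases "j \<le> T - 1")
    case True
    then have e: "nat (T - j) = Suc (nat (T - (j + 1)))" by arith
    have e2: "T - int (nat (T - j)) + 1 = j + 1" using True by simp
    have e3: "j + 1 \<le> T" using True by simp
    show ?thesis using True e e2 e3 by (simp add: dd_def shape_def)
  next
    case False
    then show ?thesis by (cases "j = T") (auto simp: dd_def shape_def D_zero)
  qed
qed

lemma sum_upto_two:
  fixes w :: nat
  assumes "\<And>v. v \<ge> 2 \<Longrightarrow> F v = (0 :: 'c)"
  shows "(\<Sum>v\<le>w. F v) = F 0 + (if w = 0 then 0 else F 1)"
proof (cases w)
  case 0 then show ?thesis by simp
next
  case (Suc m)
  have "(\<Sum>v\<le>w. F v) = (\<Sum>v\<in>{0, 1}. F v)"
    by (rule sum.mono_neutral_right) (use Suc assms in auto)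
  then show ?thesis using Suc by simp
qed

lemma dd_sg: "dd (sg a k) = shape k (\<lambda>w. if w = 0 then D a else if w = 1 then sc (of_int k) a else 0)"
  unfolding dd_shape by (rule shape_cong) (auto simp: dl_def D_zero)

lemma RV0_ss: "mul (dd (sg a k)) (sg b r) = 0"
proof -
  let ?q = "\<lambda>w. if w = 0 then D a else if w = 1 then sc (of_int k) a else 0"
  have fq: "fin_supp (shape k ?q)" by (rule fin_supp_shape) (rule finite_subset[of _ "{0,1}"], auto)
  have "mul (dd (sg a k)) (sg b r) = shape (k + r) (\<lambda>w. \<Sum>v\<le>w. sc ((of_int (k - int v) :: 'k) gchoose (w - v)) (pr (w - v) (?q v) b))"
    unfolding dd_sg by (rule mul_shape_s[OF fq])
  also have "\<dots> = shape (k + r) (\<lambda>w. 0)"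
  proof (rule shape_cong)
    fix w
    have "(\<Sum>v\<le>w. sc ((of_int (k - int v) :: 'k) gchoose (w - v)) (pr (w - v) (?q v) b))
      = sc ((of_int k :: 'k) gchoose w) (pr w (D a) b) + (if w = 0 then 0 else
          sc ((of_int (k - 1) :: 'k) gchoose (w - 1)) (pr (w - 1) (sc (of_int k) a) b))"
      by (subst sum_upto_two) (auto simp: prL_zero)
    also have "\<dots> = 0"
    proof (cases w)
      case 0 then show ?thesis by (simp add: sesqL)
    next
      case (Suc m)
      have c: "(of_int k :: 'k) * ((of_int k - 1) gchoose m) = of_nat (Suc m) * (of_int k gchoose Suc m)"
        by (rule gbinomial_absorption[symmetric])
      have "sc ((of_int k :: 'k) gchoose w) (pr w (D a) b) = - sc (of_nat (Suc m) * (of_int k gchoose Suc m)) (pr m a b)"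
        using Suc by (simp add: sesqL mult.commute)
      moreover have "sc ((of_int (k - 1) :: 'k) gchoose (w - 1)) (pr (w - 1) (sc (of_int k) a) b)
          = sc (of_int k * ((of_int k - 1) gchoose m)) (pr m a b)"
        using Suc by (simp add: prL_scale mult.commute)
      ultimately show ?thesis using Suc c by simp
    qed
    finally show "(\<Sum>v\<le>w. sc ((of_int (k - int v) :: 'k) gchoose (w - v)) (pr (w - v) (?q v) b)) = 0" .
  qed
  finally show ?thesis by (simp add: shape_zero)
qed

lemma Der_ss: "dd (mul (sg a k) (sg b r)) = mul (sg a k) (dd (sg b r))"
proof -
  let ?q = "\<lambda>w. if w = 0 then D b else if w = 1 then sc (of_int r) b else 0"
  have fq: "fin_supp (shape r ?q)" by (rule fin_supp_shape) (rule finite_subset[of _ "{0,1}"], auto)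
  have R: "mul (sg a k) (dd (sg b r)) = shape (k + r) (\<lambda>w. \<Sum>v\<le>w. sc ((of_int k :: 'k) gchoose (w - v)) (pr (w - v) a (?q v)))"
    unfolding dd_sg by (rule mul_s_shape[OF fq])
  have L: "dd (mul (sg a k) (sg b r)) = shape (k + r) (\<lambda>w. D (sc ((of_int k :: 'k) gchoose w) (pr w a b)) +
     (if w = 0 then 0 else sc (of_int (k + r - int w + 1)) (sc ((of_int k :: 'k) gchoose (w - 1)) (pr (w - 1) a b))))"
    unfolding mul_ss dd_shape ..
  show ?thesis unfolding L R
  proof (rule shape_cong)
    fix w
    have "(\<Sum>v\<le>w. sc ((of_int k :: 'k) gchoose (w - v)) (pr (w - v) a (?q v)))
      = sc ((of_int k :: 'k) gchoose w) (pr w a (D b)) + (if w = 0 then 0 else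
          sc ((of_int k :: 'k) gchoose (w - 1)) (pr (w - 1) a (sc (of_int r) b)))"
      by (subst sum_upto_two) (auto simp: prR_zero)
    also have "\<dots> = D (sc ((of_int k :: 'k) gchoose w) (pr w a b)) +
     (if w = 0 then 0 else sc (of_int (k + r - int w + 1)) (sc ((of_int k :: 'k) gchoose (w - 1)) (pr (w - 1) a b)))"
    proof (cases w)
      case 0 then show ?thesis by (simp add: sesqR D_scale)
    next
      case (Suc m)
      have c: "(of_int k :: 'k) * (of_int k gchoose m) = of_nat m * (of_int k gchoose m) + of_nat (Suc m) * (of_int k gchoose Suc m)"
        by (rule gbinomial_mult_1)
      have c2: "(of_int (k + r - int w + 1) :: 'k) * (of_int k gchoose m) = of_nat (Suc m) * (of_int k gchoose Suc m) + (of_int k gchoose m) * of_int r"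
        using c Suc by (simp add: algebra_simps)
      have "sc ((of_int k :: 'k) gchoose w) (pr w a (D b)) + sc ((of_int k :: 'k) gchoose (w - 1)) (pr (w - 1) a (sc (of_int r) b))
         = sc ((of_int k :: 'k) gchoose w) (D (pr w a b)) + (sc (of_nat (Suc m) * (of_int k gchoose Suc m)) (pr m a b) + sc ((of_int k gchoose m) * of_int r) (pr m a b))"
        using Suc by (simp add: sesqR prR_scale scale_right_distrib mult.commute add.assoc)
      also have "\<dots> = sc ((of_int k :: 'k) gchoose w) (D (pr w a b)) + sc (of_int (k + r - int w + 1)) (sc ((of_int k :: 'k) gchoose (w - 1)) (pr (w - 1) a b))"
        using Suc c2 by (simp add: scale_left_distrib[symmetric] mult.commute)
      finally show ?thesis using Suc by (simp add: D_scale)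
    qed
    finally show "D (sc ((of_int k :: 'k) gchoose w) (pr w a b)) +
     (if w = 0 then 0 else sc (of_int (k + r - int w + 1)) (sc ((of_int k :: 'k) gchoose (w - 1)) (pr (w - 1) a b))) = (\<Sum>v\<le>w. sc ((of_int k :: 'k) gchoose (w - v)) (pr (w - v) a (?q v)))" by (rule sym)
  qed
qed

end

context CA begin

lemma mul_expand_sg:
  assumes "fin_supp g" "fin_supp h"
  shows "mul g h = (\<Sum>k\<in>{k. g k \<noteq> 0}. \<Sum>r\<in>{r. h r \<noteq> 0}. mul (sg (g k) k) (sg (h r) r))"
proof -
  have "mul g h = mul (\<Sum>k\<in>{k. g k \<noteq> 0}. sg (g k) k) h"
    using fin_supp_decomp[OF assms(1)] by simp
  also have "\<dots> = (\<Sum>k\<in>{k. g k \<noteq> 0}. mul (sg (g k) k) h)"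
    by (rule mul_sum_left) (auto simp: fin_supp_sg assms)
  also have "\<dots> = (\<Sum>k\<in>{k. g k \<noteq> 0}. mul (sg (g k) k) (\<Sum>r\<in>{r. h r \<noteq> 0}. sg (h r) r))"
    using fin_supp_decomp[OF assms(2)] by simp
  also have "\<dots> = (\<Sum>k\<in>{k. g k \<noteq> 0}. \<Sum>r\<in>{r. h r \<noteq> 0}. mul (sg (g k) k) (sg (h r) r))"
    by (intro sum.cong refl mul_sum_right) (auto simp: fin_supp_sg)
  finally show ?thesis .
qed

lemma RV0:
  assumes "fin_supp g" "fin_supp h"
  shows "mul (dd g) h = 0"
proof -
  have "mul (dd g) h = mul (\<Sum>k\<in>{k. g k \<noteq> 0}. dd (sg (g k) k)) h"
    using fin_supp_decomp[OF assms(1)] dd_sum by metis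
  also have "\<dots> = (\<Sum>k\<in>{k. g k \<noteq> 0}. mul (dd (sg (g k) k)) h)"
    by (rule mul_sum_left) (auto simp: fin_supp_sg fin_supp_dd assms)
  also have "\<dots> = (\<Sum>k\<in>{k. g k \<noteq> 0}. mul (dd (sg (g k) k)) (\<Sum>r\<in>{r. h r \<noteq> 0}. sg (h r) r))"
    using fin_supp_decomp[OF assms(2)] by simp
  also have "\<dots> = (\<Sum>k\<in>{k. g k \<noteq> 0}. \<Sum>r\<in>{r. h r \<noteq> 0}. mul (dd (sg (g k) k)) (sg (h r) r))"
    by (intro sum.cong refl mul_sum_right) (auto simp: fin_supp_sg fin_supp_dd)
  also have "\<dots> = 0" by (simp add: RV0_ss)
  finally show ?thesis .
qed

lemma Der:
  assumes "fin_supp g" "fin_supp h"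
  shows "dd (mul g h) = mul g (dd h)"
proof -
  have "dd (mul g h) = (\<Sum>k\<in>{k. g k \<noteq> 0}. \<Sum>r\<in>{r. h r \<noteq> 0}. dd (mul (sg (g k) k) (sg (h r) r)))"
    unfolding mul_expand_sg[OF assms] dd_sum ..
  also have "\<dots> = (\<Sum>k\<in>{k. g k \<noteq> 0}. \<Sum>r\<in>{r. h r \<noteq> 0}. mul (sg (g k) k) (dd (sg (h r) r)))"
    by (simp add: Der_ss)
  also have "\<dots> = (\<Sum>k\<in>{k. g k \<noteq> 0}. mul (sg (g k) k) (\<Sum>r\<in>{r. h r \<noteq> 0}. dd (sg (h r) r)))"
    by (intro sum.cong refl mul_sum_right[symmetric]) (auto simp: fin_supp_sg fin_supp_dd)
  also have "\<dots> = (\<Sum>k\<in>{k. g k \<noteq> 0}. mul (sg (g k) k) (dd h))"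
    using fin_supp_decomp[OF assms(2)] dd_sum by metis
  also have "\<dots> = mul (\<Sum>k\<in>{k. g k \<noteq> 0}. sg (g k) k) (dd h)"
    by (rule mul_sum_left[symmetric]) (auto simp: fin_supp_sg fin_supp_dd assms)
  also have "\<dots> = mul g (dd h)"
    using fin_supp_decomp[OF assms(1)] by simp
  finally show ?thesis .
qed

lemma R_step: "f \<in> RR \<Longrightarrow> f + coeff_gen sc D a k \<in> RR"
  unfolding plus_fun_def by (rule coeff_rel.step)

lemma R_zero: "0 \<in> RR"
  unfolding zero_fun_def by (rule coeff_rel.zero)

lemma R_dd_sum: "finite I \<Longrightarrow> (\<Sum>i\<in>I. dd (sg (a i) (k i))) \<in> RR"
proof (induct I rule: finite_induct)
  case empty then show ?case by (simp only: sum.empty R_zero)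
next
  case (insert x J)
  have eq: "(\<Sum>i\<in>insert x J. dd (sg (a i) (k i))) = (\<Sum>i\<in>J. dd (sg (a i) (k i))) + coeff_gen sc D (a x) (k x)"
    by (simp only: sum.insert[OF insert(1,2)] gen_dd add.commute)
  show ?case unfolding eq by (rule R_step[OF insert(3)])
qed

lemma R_dd: assumes "fin_supp f" shows "dd f \<in> RR"
proof -
  have "dd f = (\<Sum>k\<in>{k. f k \<noteq> 0}. dd (sg (f k) k))"
    using fin_supp_decomp[OF assms] dd_sum by metis
  then show ?thesis using R_dd_sum[where I="{k. f k \<noteq> 0}" and a=f and k="\<lambda>k. k"] assms unfolding fin_supp_def by simp
qed

lemma R_repr: "r \<in> RR \<Longrightarrow> \<exists>h. fin_supp h \<and> r = dd h"
proof (induct rule: coeff_rel.induct)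
  case zero
  have "(\<lambda>_::int. 0::'c) = dd 0" unfolding dd_zero by (rule ext) simp
  then show ?case using fin_supp_zero by blast
next
  case (step f a k)
  then obtain h where h: "fin_supp h" "f = dd h" by blast
  have "(\<lambda>j. f j + coeff_gen sc D a k j) = f + coeff_gen sc D a k" by (simp only: plus_fun_def)
  also have "\<dots> = dd (h + sg a k)" by (simp only: dd_add h(2) gen_dd)
  finally have "(\<lambda>j. f j + coeff_gen sc D a k j) = dd (h + sg a k)" .
  then show ?case using h fin_supp_add fin_supp_sg by blast
qed

lemma R_fin: "r \<in> RR \<Longrightarrow> fin_supp r"
  using R_repr fin_supp_dd by blast

lemma R_add: "f \<in> RR \<Longrightarrow> g \<in> RR \<Longrightarrow> f + g \<in> RR"
  using R_repr[of f] R_repr[of g] by (metis R_dd dd_add fin_supp_add)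
lemma R_neg: "f \<in> RR \<Longrightarrow> - f \<in> RR"
  using R_repr[of f] by (metis R_dd dd_neg fin_supp_neg)
lemma R_diff: "f \<in> RR \<Longrightarrow> g \<in> RR \<Longrightarrow> f - g \<in> RR"
  using R_repr[of f] R_repr[of g] by (metis R_dd dd_diff fin_supp_diff)
lemma R_scf: "f \<in> RR \<Longrightarrow> scf c f \<in> RR"
  using R_repr[of f] by (metis R_dd dd_scf fin_supp_scf)

lemma RV: "r \<in> RR \<Longrightarrow> fin_supp g \<Longrightarrow> mul r g = 0"
  using R_repr[of r] RV0 by blast
lemma VR: "r \<in> RR \<Longrightarrow> fin_supp g \<Longrightarrow> mul g r \<in> RR"
  using R_repr[of r] by (metis Der R_dd fin_supp_mul)

end

context CA begin

definition Tm where "Tm p q r y = mul (mul (mul p q) y) r - mul (mul p q) (mul y r)"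
definition Pp where "Pp x1 x2 x3 y = Tm x1 x2 x3 y + Tm x2 x1 x3 y + Tm x1 x3 x2 y + Tm x3 x1 x2 y + Tm x2 x3 x1 y + Tm x3 x2 x1 y"
definition Qq where "Qq a b c d = mul a (mul b (mul c d)) + mul (mul b (mul a c)) d + mul c (mul b (mul a d))
   - mul (mul a b) (mul c d) - mul (mul a c) (mul b d) - mul (mul c b) (mul a d)"

definition comm where "comm \<longleftrightarrow> (\<forall>f g. fin_supp f \<longrightarrow> fin_supp g \<longrightarrow> mul f g - mul g f \<in> RR)"

lemma comm_iff: "coeff_commutative sc D pr \<longleftrightarrow> comm"
  unfolding coeff_commutative_def comm_def fun_diff_def ..

lemma eq_left: "X - Y \<in> RR \<Longrightarrow> fin_supp X \<Longrightarrow> fin_supp Y \<Longrightarrow> fin_supp Z \<Longrightarrow> mul X Z = mul Y Z"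
  using RV[of "X - Y" Z] mul_diff_left[of X Y Z] by simp

lemma PQ:
  assumes cm: comm and fs: "fin_supp a" "fin_supp b" "fin_supp c" "fin_supp d"
  shows "Pp a c d b - (Qq a b c d + Qq a b c d) \<in> RR"
proof -
  have C: "mul f g - mul g f \<in> RR" if "fin_supp f" "fin_supp g" for f g using cm that unfolding comm_def by blast
  have M: "fin_supp (mul x y)" if "fin_supp x" "fin_supp y" for x y using that fin_supp_mul by blast
  note fs' = fs M[OF fs(1) fs(2)] M[OF fs(1) fs(3)] M[OF fs(1) fs(4)] M[OF fs(2) fs(1)] M[OF fs(2) fs(3)] M[OF fs(2) fs(4)]
     M[OF fs(3) fs(1)] M[OF fs(3) fs(2)] M[OF fs(3) fs(4)] M[OF fs(4) fs(1)] M[OF fs(4) fs(2)] M[OF fs(4) fs(3)]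
  have e_ca: "mul (mul c a) Z = mul (mul a c) Z" if "fin_supp Z" for Z by (rule eq_left) (use C fs' that in auto)
  have e_da: "mul (mul d a) Z = mul (mul a d) Z" if "fin_supp Z" for Z by (rule eq_left) (use C fs' that in auto)
  have e_dc: "mul (mul d c) Z = mul (mul c d) Z" if "fin_supp Z" for Z by (rule eq_left) (use C fs' that in auto)
  have e_ba: "mul (mul b a) Z = mul (mul a b) Z" if "fin_supp Z" for Z by (rule eq_left) (use C fs' that in auto)
  have e_bc: "mul (mul b c) Z = mul (mul c b) Z" if "fin_supp Z" for Z by (rule eq_left) (use C fs' that in auto)
  define D1 where "D1 = mul (mul (mul a c) b) d - mul (mul b (mul a c)) d"
  define D2 where "D2 = mul (mul (mul c a) b) d - mul (mul b (mul a c)) d"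
  define D3 where "D3 = mul (mul c a) (mul b d) - mul (mul a c) (mul b d)"
  define D4 where "D4 = mul (mul (mul a d) b) c - mul c (mul b (mul a d))"
  define D5 where "D5 = mul (mul (mul d a) b) c - mul c (mul b (mul a d))"
  define D6 where "D6 = mul (mul a d) (mul b c) - mul (mul c b) (mul a d)"
  define D7 where "D7 = mul (mul d a) (mul b c) - mul (mul c b) (mul a d)"
  define D8 where "D8 = mul (mul (mul c d) b) a - mul a (mul b (mul c d))"
  define D9 where "D9 = mul (mul (mul d c) b) a - mul a (mul b (mul c d))"
  define D10 where "D10 = mul (mul c d) (mul b a) - mul (mul a b) (mul c d)"
  define D11 where "D11 = mul (mul d c) (mul b a) - mul (mul a b) (mul c d)"
  have d1: "D1 = 0" unfolding D1_def using eq_left[of "mul (mul a c) b" "mul b (mul a c)" d] C fs' M by auto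
  have d2: "D2 = 0" unfolding D2_def using e_ca[of b] d1 fs unfolding D1_def by simp
  have d3: "D3 = 0" unfolding D3_def using e_ca[of "mul b d"] fs' by simp
  have d4: "D4 \<in> RR"
  proof -
    have "D4 = (mul (mul (mul a d) b) c - mul c (mul (mul a d) b)) + mul c (mul (mul a d) b - mul b (mul a d))"
      unfolding D4_def using mul_diff_right[of "mul (mul a d) b" "mul b (mul a d)" c] fs' M by simp
    moreover have "mul c (mul (mul a d) b - mul b (mul a d)) \<in> RR" by (rule VR) (use C fs' M in auto)
    ultimately show ?thesis using R_add C fs' M by auto
  qed
  have d5: "D5 = D4" unfolding D4_def D5_def using e_da[of b] fs by simp
  have d6: "D6 \<in> RR"
  proof -
    have "D6 = mul (mul a d) (mul b c) - mul (mul b c) (mul a d)"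
      unfolding D6_def using e_bc[of "mul a d"] fs' by simp
    then show ?thesis using C fs' by simp
  qed
  have d7: "D7 = D6" unfolding D6_def D7_def using e_da[of "mul b c"] fs' by simp
  have d8: "D8 \<in> RR"
  proof -
    have "D8 = (mul (mul (mul c d) b) a - mul a (mul (mul c d) b)) + mul a (mul (mul c d) b - mul b (mul c d))"
      unfolding D8_def using mul_diff_right[of "mul (mul c d) b" "mul b (mul c d)" a] fs' M by simp
    moreover have "mul a (mul (mul c d) b - mul b (mul c d)) \<in> RR" by (rule VR) (use C fs' M in auto)
    ultimately show ?thesis using R_add C fs' M by auto
  qed
  have d9: "D9 = D8" unfolding D8_def D9_def using e_dc[of b] fs by simp
  have d10: "D10 \<in> RR"
  proof -
    have "D10 = mul (mul c d) (mul b a) - mul (mul b a) (mul c d)"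
      unfolding D10_def using e_ba[of "mul c d"] fs' by simp
    then show ?thesis using C fs' by simp
  qed
  have d11: "D11 = D10" unfolding D10_def D11_def using e_dc[of "mul b a"] fs' by simp
  have "Pp a c d b - (Qq a b c d + Qq a b c d) = D1 + D2 + D4 + D5 + D8 + D9 - D3 - D6 - D7 - D10 - D11"
    unfolding Pp_def Tm_def Qq_def D1_def D2_def D3_def D4_def D5_def D6_def D7_def D8_def D9_def D10_def D11_def
    by (simp add: algebra_simps)
  also have "\<dots> \<in> RR"
    using d1 d2 d3 d4 d5 d6 d7 d8 d9 d10 d11 R_add R_diff R_zero by simp
  finally show ?thesis .
qed

end

context CA begin

lemma fs_induct:
  assumes x: "fin_supp x" and P0: "P 0" and Ps: "\<And>a k. P (sg a k)"
    and Padd: "\<And>f g. fin_supp f \<Longrightarrow> fin_supp g \<Longrightarrow> P f \<Longrightarrow> P g \<Longrightarrow> P (f + g)"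
  shows "P x"
proof -
  have "finite I \<Longrightarrow> P (\<Sum>k\<in>I. sg (x k) k)" for I
  proof (induct I rule: finite_induct)
    case empty then show ?case using P0 by (simp only: sum.empty)
  next
    case (insert i J)
    have "P (sg (x i) i + (\<Sum>k\<in>J. sg (x k) k))"
      by (rule Padd) (use insert Ps fin_supp_sg fin_supp_sum[of J "\<lambda>k. sg (x k) k"] in auto)
    then show ?case by (simp only: sum.insert[OF insert(1,2)])
  qed
  then show ?thesis using fin_supp_decomp[OF x] x unfolding fin_supp_def by metis
qed

lemma Tm_add1:
  assumes "fin_supp p" "fin_supp p'" "fin_supp q" "fin_supp r" "fin_supp y"
  shows "Tm (p + p') q r y = Tm p q r y + Tm p' q r y"
  unfolding Tm_def using assms by (simp add: mul_add_left mul_add_right fin_supp_mul fin_supp_add)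
lemma Tm_add2:
  assumes "fin_supp p" "fin_supp q" "fin_supp q'" "fin_supp r" "fin_supp y"
  shows "Tm p (q + q') r y = Tm p q r y + Tm p q' r y"
  unfolding Tm_def using assms by (simp add: mul_add_left mul_add_right fin_supp_mul fin_supp_add)
lemma Tm_add3:
  assumes "fin_supp p" "fin_supp q" "fin_supp r" "fin_supp r'" "fin_supp y"
  shows "Tm p q (r + r') y = Tm p q r y + Tm p q r' y"
  unfolding Tm_def using assms by (simp add: mul_add_left mul_add_right fin_supp_mul fin_supp_add)
lemma Tm_add4:
  assumes "fin_supp p" "fin_supp q" "fin_supp r" "fin_supp y" "fin_supp y'"
  shows "Tm p q r (y + y') = Tm p q r y + Tm p q r y'"
  unfolding Tm_def using assms by (simp add: mul_add_left mul_add_right fin_supp_mul fin_supp_add)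

lemma Tm_zero: "Tm 0 q r y = 0" "Tm p 0 r y = 0" "Tm p q 0 y = 0" "Tm p q r 0 = 0"
  unfolding Tm_def by (simp_all add: mul_zero_left mul_zero_right)

lemma Pp_zero: "Pp 0 q r y = 0" "Pp p 0 r y = 0" "Pp p q 0 y = 0" "Pp p q r 0 = 0"
  unfolding Pp_def by (simp_all add: Tm_zero)

lemma polarize:
  assumes f: "fin_supp x1" "fin_supp x2" "fin_supp x3" "fin_supp y"
  shows "Pp x1 x2 x3 y = Tm (x1 + x2 + x3) (x1 + x2 + x3) (x1 + x2 + x3) y
     - Tm (x1 + x2) (x1 + x2) (x1 + x2) y - Tm (x1 + x3) (x1 + x3) (x1 + x3) y - Tm (x2 + x3) (x2 + x3) (x2 + x3) y
     + Tm x1 x1 x1 y + Tm x2 x2 x2 y + Tm x3 x3 x3 y"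
proof -
  have a: "fin_supp (x1 + x2)" "fin_supp (x1 + x3)" "fin_supp (x2 + x3)" "fin_supp (x1 + x2 + x3)"
    using f by (simp_all add: fin_supp_add)
  show ?thesis unfolding Pp_def
    using f a by (simp add: Tm_add1 Tm_add2 Tm_add3 fin_supp_add)
qed

lemma Pp_add1:
  assumes "fin_supp p" "fin_supp p'" "fin_supp q" "fin_supp r" "fin_supp y"
  shows "Pp (p + p') q r y = Pp p q r y + Pp p' q r y"
  unfolding Pp_def using assms by (simp add: Tm_add1 Tm_add2 Tm_add3 algebra_simps)
lemma Pp_add2:
  assumes "fin_supp p" "fin_supp q" "fin_supp q'" "fin_supp r" "fin_supp y"
  shows "Pp p (q + q') r y = Pp p q r y + Pp p q' r y"
  unfolding Pp_def using assms by (simp add: Tm_add1 Tm_add2 Tm_add3 algebra_simps)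
lemma Pp_add3:
  assumes "fin_supp p" "fin_supp q" "fin_supp r" "fin_supp r'" "fin_supp y"
  shows "Pp p q (r + r') y = Pp p q r y + Pp p q r' y"
  unfolding Pp_def using assms by (simp add: Tm_add1 Tm_add2 Tm_add3 algebra_simps)
lemma Pp_add4:
  assumes "fin_supp p" "fin_supp q" "fin_supp r" "fin_supp y" "fin_supp y'"
  shows "Pp p q r (y + y') = Pp p q r y + Pp p q r y'"
  unfolding Pp_def using assms by (simp add: Tm_add4 algebra_simps)

lemma Pp_all:
  assumes S: "\<And>a b c d n l k m. Pp (sg a n) (sg c l) (sg d k) (sg b m) \<in> RR"
    and f: "fin_supp x1" "fin_supp x2" "fin_supp x3" "fin_supp y"
  shows "Pp x1 x2 x3 y \<in> RR"
proof -
  have s1: "Pp (sg a n) (sg c l) (sg d k) y \<in> RR" if "fin_supp y" for a c d n l k y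
  proof (rule fs_induct[OF that])
    show "Pp (sg a n) (sg c l) (sg d k) 0 \<in> RR" by (simp only: Pp_zero R_zero)
    show "Pp (sg a n) (sg c l) (sg d k) (sg b m) \<in> RR" for b m by (rule S)
    show "Pp (sg a n) (sg c l) (sg d k) (f + g) \<in> RR" if "fin_supp f" "fin_supp g" "Pp (sg a n) (sg c l) (sg d k) f \<in> RR"
       "Pp (sg a n) (sg c l) (sg d k) g \<in> RR" for f g
      using that by (simp only: Pp_add4 fin_supp_sg R_add)
  qed
  have s2: "Pp (sg a n) (sg c l) x3 y \<in> RR" if "fin_supp x3" "fin_supp y" for a c n l x3 y
  proof (rule fs_induct[OF that(1)])
    show "Pp (sg a n) (sg c l) 0 y \<in> RR" by (simp only: Pp_zero R_zero)
    show "Pp (sg a n) (sg c l) (sg d k) y \<in> RR" for d k by (rule s1[OF that(2)])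
    show "Pp (sg a n) (sg c l) (f + g) y \<in> RR" if "fin_supp f" "fin_supp g" "Pp (sg a n) (sg c l) f y \<in> RR"
       "Pp (sg a n) (sg c l) g y \<in> RR" for f g
      using that \<open>fin_supp y\<close> by (simp only: Pp_add3 fin_supp_sg R_add)
  qed
  have s3: "Pp (sg a n) x2 x3 y \<in> RR" if "fin_supp x2" "fin_supp x3" "fin_supp y" for a n x2 x3 y
  proof (rule fs_induct[OF that(1)])
    show "Pp (sg a n) 0 x3 y \<in> RR" by (simp only: Pp_zero R_zero)
    show "Pp (sg a n) (sg c l) x3 y \<in> RR" for c l by (rule s2[OF that(2,3)])
    show "Pp (sg a n) (f + g) x3 y \<in> RR" if "fin_supp f" "fin_supp g" "Pp (sg a n) f x3 y \<in> RR"
       "Pp (sg a n) g x3 y \<in> RR" for f g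
      using that \<open>fin_supp x3\<close> \<open>fin_supp y\<close> by (simp only: Pp_add2 fin_supp_sg R_add)
  qed
  show ?thesis
  proof (rule fs_induct[OF f(1)])
    show "Pp 0 x2 x3 y \<in> RR" by (simp only: Pp_zero R_zero)
    show "Pp (sg a n) x2 x3 y \<in> RR" for a n by (rule s3[OF f(2,3,4)])
    show "Pp (f + g) x2 x3 y \<in> RR" if "fin_supp f" "fin_supp g" "Pp f x2 x3 y \<in> RR"
       "Pp g x2 x3 y \<in> RR" for f g
      using that f by (simp only: Pp_add1 R_add)
  qed
qed

lemma six: "sc (6::'k) v = v + v + v + v + v + v"
proof -
  have "(6::'k) = 1 + 1 + 1 + 1 + 1 + 1" by simp
  then show ?thesis by (simp only: scale_left_distrib scale_one)
qed

lemma Tm_from_Pp: "Tm x x x y = scf (1/6) (Pp x x x y)"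
proof
  fix j
  have "scf (1/6) (Pp x x x y) j = sc (1/6) (sc 6 (Tm x x x y j))"
    unfolding scf_def Pp_def six by simp
  also have "\<dots> = Tm x x x y j" by simp
  finally show "Tm x x x y j = scf (1/6) (Pp x x x y) j" by simp
qed

lemma jordan_iff: "coeff_jordan sc D pr \<longleftrightarrow> comm \<and> (\<forall>x y. fin_supp x \<longrightarrow> fin_supp y \<longrightarrow> Tm x x x y \<in> RR)"
  unfolding coeff_jordan_def comm_iff Tm_def fun_diff_def ..

end

definition tri :: "nat \<Rightarrow> (nat \<times> nat \<times> nat) set" where
  "tri w = {(u, s, t). u + s + t = w}"

lemma finite_tri: "finite (tri w)"
  by (rule finite_subset[of _ "{..w} \<times> {..w} \<times> {..w}"]) (auto simp: tri_def)

lemma sum_tri_A: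
  "(\<Sum>v'\<le>w. \<Sum>v\<le>v'. G (w - v') (v' - v) v) = (\<Sum>(u, s, t)\<in>tri w. (G u s t :: 'a::comm_monoid_add))"
proof -
  have "(\<Sum>v'\<le>w. \<Sum>v\<le>v'. G (w - v') (v' - v) v) = (\<Sum>(v', v)\<in>Sigma {..w} (\<lambda>v'. {..v'}). G (w - v') (v' - v) v)"
    by (rule sum.Sigma) auto
  also have "\<dots> = (\<Sum>(u, s, t)\<in>tri w. G u s t)"
    by (rule sum.reindex_bij_witness[where i = "\<lambda>(u, s, t). (s + t, t)" and j = "\<lambda>(v', v). (w - v', v' - v, v)"])
       (auto simp: tri_def)
  finally show ?thesis .
qed

lemma sum_tri_B:
  "(\<Sum>v1\<le>w. \<Sum>v2\<le>w - v1. \<Sum>i\<le>w - v1 - v2. H (v1 + i) (w - v1 - v2 - i) v2 i)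
   = (\<Sum>(u, s, t)\<in>tri w. \<Sum>i\<le>u. (H u s t i :: 'a::comm_monoid_add))"
proof -
  have "(\<Sum>v1\<le>w. \<Sum>v2\<le>w - v1. \<Sum>i\<le>w - v1 - v2. H (v1 + i) (w - v1 - v2 - i) v2 i)
     = (\<Sum>v1\<le>w. \<Sum>(v2, i)\<in>Sigma {..w - v1} (\<lambda>v2. {..w - v1 - v2}). H (v1 + i) (w - v1 - v2 - i) v2 i)"
    by (intro sum.cong refl sum.Sigma) auto
  also have "\<dots> = (\<Sum>(v1, v2, i)\<in>Sigma {..w} (\<lambda>v1. Sigma {..w - v1} (\<lambda>v2. {..w - v1 - v2})). H (v1 + i) (w - v1 - v2 - i) v2 i)"
    by (subst sum.Sigma) (auto simp: split_def)
  also have "\<dots> = (\<Sum>((u, s, t), i)\<in>Sigma (tri w) (\<lambda>(u, s, t). {..u}). H u s t i)"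
    by (rule sum.reindex_bij_witness[where i = "\<lambda>((u, s, t), i). (u - i, t, i)" and j = "\<lambda>(v1, v2, i). ((v1 + i, w - v1 - v2 - i, v2), i)"])
       (auto simp: tri_def)
  also have "\<dots> = (\<Sum>(u, s, t)\<in>tri w. \<Sum>i\<le>u. H u s t i)"
  proof -
    have "(\<Sum>x\<in>tri w. \<Sum>i\<in>{..fst x}. H (fst x) (fst (snd x)) (snd (snd x)) i)
       = (\<Sum>(x, i)\<in>Sigma (tri w) (\<lambda>x. {..fst x}). H (fst x) (fst (snd x)) (snd (snd x)) i)"
      by (rule sum.Sigma) (auto simp: finite_tri)
    then show ?thesis by (simp add: split_def)
  qed
  finally show ?thesis .
qed

lemma sum_tri_C:
  "(\<Sum>v'\<le>w. \<Sum>v\<le>v'. \<Sum>i\<le>w - v'. \<Sum>j\<le>w - v' - i. H (v + i) (v' - v + j) (w - v' - i - j) i j)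
   = (\<Sum>(u, s, t)\<in>tri w. \<Sum>s1\<le>u. \<Sum>s2\<le>s. (H u s t s1 s2 :: 'a::comm_monoid_add))"
proof -
  have "(\<Sum>v'\<le>w. \<Sum>v\<le>v'. \<Sum>i\<le>w - v'. \<Sum>j\<le>w - v' - i. H (v + i) (v' - v + j) (w - v' - i - j) i j)
     = (\<Sum>v'\<le>w. \<Sum>v\<le>v'. \<Sum>(i, j)\<in>Sigma {..w - v'} (\<lambda>i. {..w - v' - i}). H (v + i) (v' - v + j) (w - v' - i - j) i j)"
    by (intro sum.cong refl sum.Sigma) auto
  also have "\<dots> = (\<Sum>v'\<le>w. \<Sum>(v, i, j)\<in>Sigma {..v'} (\<lambda>v. Sigma {..w - v'} (\<lambda>i. {..w - v' - i})). H (v + i) (v' - v + j) (w - v' - i - j) i j)"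
    by (intro sum.cong refl, subst sum.Sigma) (auto simp: split_def)
  also have "\<dots> = (\<Sum>(v', v, i, j)\<in>Sigma {..w} (\<lambda>v'. Sigma {..v'} (\<lambda>v. Sigma {..w - v'} (\<lambda>i. {..w - v' - i}))). H (v + i) (v' - v + j) (w - v' - i - j) i j)"
    by (subst sum.Sigma) (auto simp: split_def)
  also have "\<dots> = (\<Sum>((u, s, t), s1, s2)\<in>Sigma (tri w) (\<lambda>(u, s, t). Sigma {..u} (\<lambda>_. {..s})). H u s t s1 s2)"
    by (rule sum.reindex_bij_witness[where i = "\<lambda>((u, s, t), s1, s2). ((u - s1) + (s - s2), u - s1, s1, s2)"
          and j = "\<lambda>(v', v, i, j). ((v + i, v' - v + j, w - v' - i - j), i, j)"])
       (auto simp: tri_def)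
  also have "\<dots> = (\<Sum>(u, s, t)\<in>tri w. \<Sum>(s1, s2)\<in>Sigma {..u} (\<lambda>_. {..s}). H u s t s1 s2)"
  proof -
    have "(\<Sum>x\<in>tri w. \<Sum>y\<in>Sigma {..fst x} (\<lambda>_. {..fst (snd x)}). H (fst x) (fst (snd x)) (snd (snd x)) (fst y) (snd y))
       = (\<Sum>(x, y)\<in>Sigma (tri w) (\<lambda>x. Sigma {..fst x} (\<lambda>_. {..fst (snd x)})). H (fst x) (fst (snd x)) (snd (snd x)) (fst y) (snd y))"
      by (rule sum.Sigma) (auto simp: finite_tri)
    then show ?thesis by (simp add: split_def)
  qed
  also have "\<dots> = (\<Sum>(u, s, t)\<in>tri w. \<Sum>s1\<le>u. \<Sum>s2\<le>s. H u s t s1 s2)"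
    by (intro sum.cong refl) (auto simp: sum.Sigma split_def)
  finally show ?thesis .
qed

context CA begin

abbreviation gc :: "int \<Rightarrow> nat \<Rightarrow> 'k" where "gc n u \<equiv> (of_int n :: 'k) gchoose u"

lemma fin_supp_ss: "fin_supp (shape (k + r) (\<lambda>w. sc (gc k w) (pr w a b)))"
proof -
  have "fin_supp (mul (sg a k) (sg b r))" by (intro fin_supp_mul fin_supp_sg)
  then show ?thesis unfolding mul_ss .
qed

lemma LLL:
  "mul (sg x1 p1) (mul (sg x2 p2) (mul (sg x3 p3) (sg x4 p4))) = shape (p1 + (p2 + (p3 + p4)))
     (\<lambda>w. \<Sum>(u, s, t)\<in>tri w. sc (gc p1 u * gc p2 s * gc p3 t) (pr u x1 (pr s x2 (pr t x3 x4))))"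
proof -
  have i1: "mul (sg x2 p2) (mul (sg x3 p3) (sg x4 p4)) = shape (p2 + (p3 + p4))
      (\<lambda>v'. \<Sum>v\<le>v'. sc (gc p2 (v' - v)) (pr (v' - v) x2 (sc (gc p3 v) (pr v x3 x4))))"
    unfolding mul_ss by (rule mul_s_shape[OF fin_supp_ss])
  have f1: "fin_supp (shape (p2 + (p3 + p4))
      (\<lambda>v'. \<Sum>v\<le>v'. sc (gc p2 (v' - v)) (pr (v' - v) x2 (sc (gc p3 v) (pr v x3 x4)))))"
  proof -
    have "fin_supp (mul (sg x2 p2) (mul (sg x3 p3) (sg x4 p4)))" by (intro fin_supp_mul fin_supp_sg)
    then show ?thesis unfolding i1 .
  qed
  have "mul (sg x1 p1) (mul (sg x2 p2) (mul (sg x3 p3) (sg x4 p4))) = shape (p1 + (p2 + (p3 + p4)))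
     (\<lambda>w. \<Sum>v'\<le>w. sc (gc p1 (w - v')) (pr (w - v') x1 (\<Sum>v\<le>v'. sc (gc p2 (v' - v)) (pr (v' - v) x2 (sc (gc p3 v) (pr v x3 x4))))))"
    unfolding i1 by (rule mul_s_shape[OF f1])
  also have "\<dots> = shape (p1 + (p2 + (p3 + p4)))
     (\<lambda>w. \<Sum>(u, s, t)\<in>tri w. sc (gc p1 u * gc p2 s * gc p3 t) (pr u x1 (pr s x2 (pr t x3 x4))))"
  proof (rule shape_cong)
    fix w
    have "(\<Sum>v'\<le>w. sc (gc p1 (w - v')) (pr (w - v') x1 (\<Sum>v\<le>v'. sc (gc p2 (v' - v)) (pr (v' - v) x2 (sc (gc p3 v) (pr v x3 x4))))))
      = (\<Sum>v'\<le>w. \<Sum>v\<le>v'. sc (gc p1 (w - v') * gc p2 (v' - v) * gc p3 v) (pr (w - v') x1 (pr (v' - v) x2 (pr v x3 x4))))"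
      by (simp add: prR_sum prR_scale scale_sum_right mult.assoc)
    also have "\<dots> = (\<Sum>(u, s, t)\<in>tri w. sc (gc p1 u * gc p2 s * gc p3 t) (pr u x1 (pr s x2 (pr t x3 x4))))"
      by (rule sum_tri_A[where G = "\<lambda>u s t. sc (gc p1 u * gc p2 s * gc p3 t) (pr u x1 (pr s x2 (pr t x3 x4)))"])
    finally show "(\<Sum>v'\<le>w. sc (gc p1 (w - v')) (pr (w - v') x1 (\<Sum>v\<le>v'. sc (gc p2 (v' - v)) (pr (v' - v) x2 (sc (gc p3 v) (pr v x3 x4))))))
      = (\<Sum>(u, s, t)\<in>tri w. sc (gc p1 u * gc p2 s * gc p3 t) (pr u x1 (pr s x2 (pr t x3 x4))))" .
  qed
  finally show ?thesis .
qed


lemma trinom: "gc p v * (((of_int p :: 'k) - of_nat v) gchoose i) = gc p (v + i) * of_nat ((v + i) choose i)"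
proof -
  have "gc p (v + i) * (of_nat (v + i) gchoose v) = gc p v * (((of_int p :: 'k) - of_nat v) gchoose (v + i - v))"
    by (rule gbinomial_trinomial_revision) simp
  moreover have "(of_nat (v + i) gchoose v :: 'k) = of_nat ((v + i) choose i)"
  proof -
    have "(of_nat (v + i) gchoose v :: 'k) = of_nat ((v + i) choose v)" by (rule binomial_gbinomial[symmetric])
    moreover have "(v + i) choose v = (v + i) choose i" using binomial_symmetric[of v "v + i"] by simp
    ultimately show ?thesis by simp
  qed
  ultimately show ?thesis by simp
qed

lemma CV1: "((of_int (p1 + p2 - int v1) :: 'k) gchoose j) * gc p1 v1
   = (\<Sum>i\<le>j. gc p1 (v1 + i) * of_nat ((v1 + i) choose i) * gc p2 (j - i))"
proof -
  have e: "(of_int (p1 + p2 - int v1) :: 'k) = ((of_int p1 :: 'k) - of_nat v1) + of_int p2" by simp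
  have "((of_int (p1 + p2 - int v1) :: 'k) gchoose j) = (\<Sum>i\<le>j. ((((of_int p1 :: 'k) - of_nat v1) gchoose i) * gc p2 (j - i)))"
    unfolding e using gbinomial_Vandermonde[of "(of_int p1 :: 'k) - of_nat v1" "of_int p2" j] by (simp add: atLeast0AtMost)
  then have "((of_int (p1 + p2 - int v1) :: 'k) gchoose j) * gc p1 v1 = (\<Sum>i\<le>j. gc p1 v1 * ((((of_int p1 :: 'k) - of_nat v1) gchoose i)) * gc p2 (j - i))"
    by (simp only: sum_distrib_right) (simp add: mult_ac)
  then show ?thesis by (simp add: trinom)
qed

lemma PP:
  "mul (mul (sg x1 p1) (sg x2 p2)) (mul (sg x3 p3) (sg x4 p4)) = shape (p1 + p2 + (p3 + p4))
   (\<lambda>w. \<Sum>(u, s, t)\<in>tri w. sc (gc p1 u * gc p2 s * gc p3 t)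
        (\<Sum>i\<le>u. sc (of_nat (u choose i)) (pr (s + i) (pr (u - i) x1 x2) (pr t x3 x4))))"
proof -
  define H where "H u s t i = sc (gc p1 u * gc p2 s * gc p3 t * of_nat (u choose i)) (pr (s + i) (pr (u - i) x1 x2) (pr t x3 x4))"
    for u s t i
  have "mul (mul (sg x1 p1) (sg x2 p2)) (mul (sg x3 p3) (sg x4 p4)) = shape (p1 + p2 + (p3 + p4))
     (\<lambda>w. \<Sum>v1\<le>w. \<Sum>v2\<le>w - v1. sc ((of_int (p1 + p2 - int v1) :: 'k) gchoose (w - v1 - v2))
            (pr (w - v1 - v2) (sc (gc p1 v1) (pr v1 x1 x2)) (sc (gc p3 v2) (pr v2 x3 x4))))"
    unfolding mul_ss by (rule mul_shape[OF fin_supp_ss fin_supp_ss])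
  also have "\<dots> = shape (p1 + p2 + (p3 + p4))
   (\<lambda>w. \<Sum>(u, s, t)\<in>tri w. sc (gc p1 u * gc p2 s * gc p3 t)
        (\<Sum>i\<le>u. sc (of_nat (u choose i)) (pr (s + i) (pr (u - i) x1 x2) (pr t x3 x4))))"
  proof (rule shape_cong)
    fix w
    have "(\<Sum>v1\<le>w. \<Sum>v2\<le>w - v1. sc ((of_int (p1 + p2 - int v1) :: 'k) gchoose (w - v1 - v2))
            (pr (w - v1 - v2) (sc (gc p1 v1) (pr v1 x1 x2)) (sc (gc p3 v2) (pr v2 x3 x4))))
      = (\<Sum>v1\<le>w. \<Sum>v2\<le>w - v1. \<Sum>i\<le>w - v1 - v2. H (v1 + i) (w - v1 - v2 - i) v2 i)"
    proof (intro sum.cong refl)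
      fix v1 v2 assume v: "v1 \<in> {..w}" "v2 \<in> {..w - v1}"
      define j where "j = w - v1 - v2"
      have "sc ((of_int (p1 + p2 - int v1) :: 'k) gchoose j)
            (pr j (sc (gc p1 v1) (pr v1 x1 x2)) (sc (gc p3 v2) (pr v2 x3 x4)))
          = sc (((of_int (p1 + p2 - int v1) :: 'k) gchoose j) * gc p1 v1 * gc p3 v2) (pr j (pr v1 x1 x2) (pr v2 x3 x4))"
        by (simp add: prL_scale prR_scale mult_ac)
      also have "\<dots> = (\<Sum>i\<le>j. sc (gc p1 (v1 + i) * of_nat ((v1 + i) choose i) * gc p2 (j - i) * gc p3 v2) (pr j (pr v1 x1 x2) (pr v2 x3 x4)))"
        unfolding CV1 by (simp add: sum_distrib_right scale_sum_left)
      also have "\<dots> = (\<Sum>i\<le>j. H (v1 + i) (j - i) v2 i)"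
        unfolding H_def by (intro sum.cong refl) (auto simp: mult_ac)
      finally show "sc ((of_int (p1 + p2 - int v1) :: 'k) gchoose (w - v1 - v2))
            (pr (w - v1 - v2) (sc (gc p1 v1) (pr v1 x1 x2)) (sc (gc p3 v2) (pr v2 x3 x4)))
          = (\<Sum>i\<le>w - v1 - v2. H (v1 + i) (w - v1 - v2 - i) v2 i)" unfolding j_def by (simp add: diff_diff_add)
    qed
    also have "\<dots> = (\<Sum>(u, s, t)\<in>tri w. \<Sum>i\<le>u. H u s t i)" by (rule sum_tri_B)
    also have "\<dots> = (\<Sum>(u, s, t)\<in>tri w. sc (gc p1 u * gc p2 s * gc p3 t)
        (\<Sum>i\<le>u. sc (of_nat (u choose i)) (pr (s + i) (pr (u - i) x1 x2) (pr t x3 x4))))"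
      unfolding H_def by (simp add: scale_sum_right split_def)
    finally show "(\<Sum>v1\<le>w. \<Sum>v2\<le>w - v1. sc ((of_int (p1 + p2 - int v1) :: 'k) gchoose (w - v1 - v2))
            (pr (w - v1 - v2) (sc (gc p1 v1) (pr v1 x1 x2)) (sc (gc p3 v2) (pr v2 x3 x4))))
      = (\<Sum>(u, s, t)\<in>tri w. sc (gc p1 u * gc p2 s * gc p3 t)
        (\<Sum>i\<le>u. sc (of_nat (u choose i)) (pr (s + i) (pr (u - i) x1 x2) (pr t x3 x4))))" .
  qed
  finally show ?thesis .
qed


lemma vdm: "((a :: 'k) + b) gchoose r = (\<Sum>i\<le>r. (a gchoose i) * (b gchoose (r - i)))"
  using gbinomial_Vandermonde[of a b r] by (simp add: atLeast0AtMost)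

lemma CV2:
  assumes "v \<le> v'"
  shows "((of_int (p2 + (p1 + p3) - int v') :: 'k) gchoose r) * gc p2 (v' - v) * gc p1 v
   = (\<Sum>i\<le>r. \<Sum>j\<le>r - i. gc p1 (v + i) * gc p2 (v' - v + j) * gc p3 (r - i - j)
        * of_nat (((v + i) choose i) * ((v' - v + j) choose j)))"
proof -
  define q where "q = v' - v"
  have e: "(of_int (p2 + (p1 + p3) - int v') :: 'k) = ((of_int p1 :: 'k) - of_nat v) + ((((of_int p2 :: 'k) - of_nat q)) + of_int p3)"
    using assms unfolding q_def by (simp add: of_nat_diff)
  have "((of_int (p2 + (p1 + p3) - int v') :: 'k) gchoose r)
     = (\<Sum>i\<le>r. \<Sum>j\<le>r - i. (((of_int p1 :: 'k) - of_nat v) gchoose i) * ((((of_int p2 :: 'k) - of_nat q)) gchoose j) * gc p3 (r - i - j))"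
    unfolding e vdm by (simp add: sum_distrib_left mult_ac)
  then have "((of_int (p2 + (p1 + p3) - int v') :: 'k) gchoose r) * gc p2 q * gc p1 v
     = (\<Sum>i\<le>r. \<Sum>j\<le>r - i. (gc p1 v * (((of_int p1 :: 'k) - of_nat v) gchoose i)) * (gc p2 q * ((((of_int p2 :: 'k) - of_nat q)) gchoose j)) * gc p3 (r - i - j))"
    by (simp only: sum_distrib_right) (simp add: mult_ac)
  then show ?thesis unfolding trinom q_def of_nat_mult by (simp add: mult_ac)
qed

lemma RS2:
  "mul (mul (sg x2 p2) (mul (sg x1 p1) (sg x3 p3))) (sg x4 p4) = shape (p2 + (p1 + p3) + p4)
   (\<lambda>w. \<Sum>(u, s, t)\<in>tri w. sc (gc p1 u * gc p2 s * gc p3 t)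
        (\<Sum>s1\<le>u. \<Sum>s2\<le>s. sc (of_nat ((u choose s1) * (s choose s2))) (pr (t + s1 + s2) (pr (s - s2) x2 (pr (u - s1) x1 x3)) x4)))"
proof -
  define H where "H u s t s1 s2 = sc (gc p1 u * gc p2 s * gc p3 t * of_nat ((u choose s1) * (s choose s2)))
     (pr (t + s1 + s2) (pr (s - s2) x2 (pr (u - s1) x1 x3)) x4)" for u s t s1 s2
  have i1: "mul (sg x2 p2) (mul (sg x1 p1) (sg x3 p3)) = shape (p2 + (p1 + p3))
      (\<lambda>v'. \<Sum>v\<le>v'. sc (gc p2 (v' - v)) (pr (v' - v) x2 (sc (gc p1 v) (pr v x1 x3))))"
    unfolding mul_ss by (rule mul_s_shape[OF fin_supp_ss])
  have f1: "fin_supp (shape (p2 + (p1 + p3))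
      (\<lambda>v'. \<Sum>v\<le>v'. sc (gc p2 (v' - v)) (pr (v' - v) x2 (sc (gc p1 v) (pr v x1 x3)))))"
  proof -
    have "fin_supp (mul (sg x2 p2) (mul (sg x1 p1) (sg x3 p3)))" by (intro fin_supp_mul fin_supp_sg)
    then show ?thesis unfolding i1 .
  qed
  have "mul (mul (sg x2 p2) (mul (sg x1 p1) (sg x3 p3))) (sg x4 p4) = shape (p2 + (p1 + p3) + p4)
     (\<lambda>w. \<Sum>v'\<le>w. sc ((of_int (p2 + (p1 + p3) - int v') :: 'k) gchoose (w - v'))
        (pr (w - v') (\<Sum>v\<le>v'. sc (gc p2 (v' - v)) (pr (v' - v) x2 (sc (gc p1 v) (pr v x1 x3)))) x4))"
    unfolding i1 by (rule mul_shape_s[OF f1])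
  also have "\<dots> = shape (p2 + (p1 + p3) + p4)
   (\<lambda>w. \<Sum>(u, s, t)\<in>tri w. sc (gc p1 u * gc p2 s * gc p3 t)
        (\<Sum>s1\<le>u. \<Sum>s2\<le>s. sc (of_nat ((u choose s1) * (s choose s2))) (pr (t + s1 + s2) (pr (s - s2) x2 (pr (u - s1) x1 x3)) x4)))"
  proof (rule shape_cong)
    fix w
    have "(\<Sum>v'\<le>w. sc ((of_int (p2 + (p1 + p3) - int v') :: 'k) gchoose (w - v'))
        (pr (w - v') (\<Sum>v\<le>v'. sc (gc p2 (v' - v)) (pr (v' - v) x2 (sc (gc p1 v) (pr v x1 x3)))) x4))
      = (\<Sum>v'\<le>w. \<Sum>v\<le>v'. sc (((of_int (p2 + (p1 + p3) - int v') :: 'k) gchoose (w - v')) * gc p2 (v' - v) * gc p1 v)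
        (pr (w - v') (pr (v' - v) x2 (pr v x1 x3)) x4))"
      by (simp add: prL_sum prL_scale prR_scale scale_sum_right mult_ac)
    also have "\<dots> = (\<Sum>v'\<le>w. \<Sum>v\<le>v'. \<Sum>i\<le>w - v'. \<Sum>j\<le>w - v' - i. H (v + i) (v' - v + j) (w - v' - i - j) i j)"
    proof (intro sum.cong refl)
      fix v' v assume v: "v' \<in> {..w}" "v \<in> {..v'}"
      have "sc (((of_int (p2 + (p1 + p3) - int v') :: 'k) gchoose (w - v')) * gc p2 (v' - v) * gc p1 v)
        (pr (w - v') (pr (v' - v) x2 (pr v x1 x3)) x4)
        = (\<Sum>i\<le>w - v'. \<Sum>j\<le>w - v' - i. sc (gc p1 (v + i) * gc p2 (v' - v + j) * gc p3 (w - v' - i - j)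
        * of_nat (((v + i) choose i) * ((v' - v + j) choose j))) (pr (w - v') (pr (v' - v) x2 (pr v x1 x3)) x4))"
        unfolding CV2[OF v(2)[simplified]] by (simp add: scale_sum_left)
      also have "\<dots> = (\<Sum>i\<le>w - v'. \<Sum>j\<le>w - v' - i. H (v + i) (v' - v + j) (w - v' - i - j) i j)"
        unfolding H_def using v by (intro sum.cong refl) (auto simp: mult_ac)
      finally show "sc (((of_int (p2 + (p1 + p3) - int v') :: 'k) gchoose (w - v')) * gc p2 (v' - v) * gc p1 v)
        (pr (w - v') (pr (v' - v) x2 (pr v x1 x3)) x4) = (\<Sum>i\<le>w - v'. \<Sum>j\<le>w - v' - i. H (v + i) (v' - v + j) (w - v' - i - j) i j)" .
    qed
    also have "\<dots> = (\<Sum>(u, s, t)\<in>tri w. \<Sum>s1\<le>u. \<Sum>s2\<le>s. H u s t s1 s2)" by (rule sum_tri_C)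
    also have "\<dots> = (\<Sum>(u, s, t)\<in>tri w. sc (gc p1 u * gc p2 s * gc p3 t)
        (\<Sum>s1\<le>u. \<Sum>s2\<le>s. sc (of_nat ((u choose s1) * (s choose s2))) (pr (t + s1 + s2) (pr (s - s2) x2 (pr (u - s1) x1 x3)) x4)))"
      unfolding H_def by (simp add: scale_sum_right split_def)
    finally show "(\<Sum>v'\<le>w. sc ((of_int (p2 + (p1 + p3) - int v') :: 'k) gchoose (w - v'))
        (pr (w - v') (\<Sum>v\<le>v'. sc (gc p2 (v' - v)) (pr (v' - v) x2 (sc (gc p1 v) (pr v x1 x3)))) x4))
      = (\<Sum>(u, s, t)\<in>tri w. sc (gc p1 u * gc p2 s * gc p3 t)
        (\<Sum>s1\<le>u. \<Sum>s2\<le>s. sc (of_nat ((u choose s1) * (s choose s2))) (pr (t + s1 + s2) (pr (s - s2) x2 (pr (u - s1) x1 x3)) x4)))" .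
  qed
  finally show ?thesis .
qed

end

lemma tri_swap13: "(\<Sum>(u, s, t)\<in>tri w. F u s t) = (\<Sum>(u, s, t)\<in>tri w. (F t s u :: 'a::comm_monoid_add))"
  by (rule sum.reindex_bij_witness[where i = "\<lambda>(u, s, t). (t, s, u)" and j = "\<lambda>(u, s, t). (t, s, u)"])
     (auto simp: tri_def)
lemma tri_swap23: "(\<Sum>(u, s, t)\<in>tri w. F u s t) = (\<Sum>(u, s, t)\<in>tri w. (F u t s :: 'a::comm_monoid_add))"
  by (rule sum.reindex_bij_witness[where i = "\<lambda>(u, s, t). (u, t, s)" and j = "\<lambda>(u, s, t). (u, t, s)"])
     (auto simp: tri_def)

context CA begin

definition LHSc where "LHSc a b c d n m l =
       pr n a (pr m b (pr l c d))
       + (\<Sum>s1\<le>n. \<Sum>s2\<le>m. sc (of_nat ((n choose s1) * (m choose s2)))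
            (pr (l + s1 + s2) (pr (m - s2) b (pr (n - s1) a c)) d))
       + pr l c (pr m b (pr n a d))"
definition RHSc where "RHSc a b c d n m l =
       (\<Sum>s\<le>n. sc (of_nat (n choose s)) (pr (m + s) (pr (n - s) a b) (pr l c d)))
       + (\<Sum>s\<le>n. sc (of_nat (n choose s)) (pr (l + s) (pr (n - s) a c) (pr m b d)))
       + (\<Sum>s\<le>l. sc (of_nat (l choose s)) (pr (m + s) (pr (l - s) c b) (pr n a d)))"

lemma KEY:
  "Qq (sg a n) (sg b m) (sg c l) (sg d k) = shape (n + m + l + k)
     (\<lambda>w. \<Sum>(u, s, t)\<in>tri w. sc (gc n u * gc m s * gc l t) (LHSc a b c d u s t - RHSc a b c d u s t))"
proof -
  let ?N = "n + m + l + k"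
  have T1: "mul (sg a n) (mul (sg b m) (mul (sg c l) (sg d k))) = shape ?N
     (\<lambda>w. \<Sum>(u, s, t)\<in>tri w. sc (gc n u * gc m s * gc l t) (pr u a (pr s b (pr t c d))))"
  proof -
    have e: "n + (m + (l + k)) = ?N" by simp
    show ?thesis using LLL[of n a m b l c k d] unfolding e .
  qed
  have T2: "mul (mul (sg b m) (mul (sg a n) (sg c l))) (sg d k) = shape ?N
     (\<lambda>w. \<Sum>(u, s, t)\<in>tri w. sc (gc n u * gc m s * gc l t)
        (\<Sum>s1\<le>u. \<Sum>s2\<le>s. sc (of_nat ((u choose s1) * (s choose s2))) (pr (t + s1 + s2) (pr (s - s2) b (pr (u - s1) a c)) d)))"
  proof -
    have e: "m + (n + l) + k = ?N" by simp
    show ?thesis using RS2[of m b n a l c k d] unfolding e .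
  qed
  have T3: "mul (sg c l) (mul (sg b m) (mul (sg a n) (sg d k))) = shape ?N
     (\<lambda>w. \<Sum>(u, s, t)\<in>tri w. sc (gc n u * gc m s * gc l t) (pr t c (pr s b (pr u a d))))"
  proof -
    have e: "l + (m + (n + k)) = ?N" by simp
    have "mul (sg c l) (mul (sg b m) (mul (sg a n) (sg d k))) = shape ?N
     (\<lambda>w. \<Sum>(u, s, t)\<in>tri w. sc (gc l u * gc m s * gc n t) (pr u c (pr s b (pr t a d))))"
      using LLL[of l c m b n a k d] unfolding e .
    also have "\<dots> = shape ?N (\<lambda>w. \<Sum>(u, s, t)\<in>tri w. sc (gc n u * gc m s * gc l t) (pr t c (pr s b (pr u a d))))"
      by (rule shape_cong, subst tri_swap13) (simp add: mult_ac)
    finally show ?thesis .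
  qed
  have T4: "mul (mul (sg a n) (sg b m)) (mul (sg c l) (sg d k)) = shape ?N
     (\<lambda>w. \<Sum>(u, s, t)\<in>tri w. sc (gc n u * gc m s * gc l t)
        (\<Sum>i\<le>u. sc (of_nat (u choose i)) (pr (s + i) (pr (u - i) a b) (pr t c d))))"
  proof -
    have e: "n + m + (l + k) = ?N" by simp
    show ?thesis using PP[of n a m b l c k d] unfolding e .
  qed
  have T5: "mul (mul (sg a n) (sg c l)) (mul (sg b m) (sg d k)) = shape ?N
     (\<lambda>w. \<Sum>(u, s, t)\<in>tri w. sc (gc n u * gc m s * gc l t)
        (\<Sum>i\<le>u. sc (of_nat (u choose i)) (pr (t + i) (pr (u - i) a c) (pr s b d))))"
  proof -
    have e: "n + l + (m + k) = ?N" by simp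
    have "mul (mul (sg a n) (sg c l)) (mul (sg b m) (sg d k)) = shape ?N
     (\<lambda>w. \<Sum>(u, s, t)\<in>tri w. sc (gc n u * gc l s * gc m t)
        (\<Sum>i\<le>u. sc (of_nat (u choose i)) (pr (s + i) (pr (u - i) a c) (pr t b d))))"
      using PP[of n a l c m b k d] unfolding e .
    also have "\<dots> = shape ?N (\<lambda>w. \<Sum>(u, s, t)\<in>tri w. sc (gc n u * gc m s * gc l t)
        (\<Sum>i\<le>u. sc (of_nat (u choose i)) (pr (t + i) (pr (u - i) a c) (pr s b d))))"
      by (rule shape_cong, subst tri_swap23) (simp add: mult_ac)
    finally show ?thesis .
  qed
  have T6: "mul (mul (sg c l) (sg b m)) (mul (sg a n) (sg d k)) = shape ?N
     (\<lambda>w. \<Sum>(u, s, t)\<in>tri w. sc (gc n u * gc m s * gc l t)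
        (\<Sum>i\<le>t. sc (of_nat (t choose i)) (pr (s + i) (pr (t - i) c b) (pr u a d))))"
  proof -
    have e: "l + m + (n + k) = ?N" by simp
    have "mul (mul (sg c l) (sg b m)) (mul (sg a n) (sg d k)) = shape ?N
     (\<lambda>w. \<Sum>(u, s, t)\<in>tri w. sc (gc l u * gc m s * gc n t)
        (\<Sum>i\<le>u. sc (of_nat (u choose i)) (pr (s + i) (pr (u - i) c b) (pr t a d))))"
      using PP[of l c m b n a k d] unfolding e .
    also have "\<dots> = shape ?N (\<lambda>w. \<Sum>(u, s, t)\<in>tri w. sc (gc n u * gc m s * gc l t)
        (\<Sum>i\<le>t. sc (of_nat (t choose i)) (pr (s + i) (pr (t - i) c b) (pr u a d))))"
      by (rule shape_cong, subst tri_swap13) (simp add: mult_ac)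
    finally show ?thesis .
  qed
  show ?thesis
    unfolding Qq_def T1 T2 T3 T4 T5 T6 shape_add shape_diff
  proof (rule shape_cong)
    fix w
    show "(\<Sum>(u, s, t)\<in>tri w. sc (gc n u * gc m s * gc l t) (pr u a (pr s b (pr t c d)))) +
          (\<Sum>(u, s, t)\<in>tri w. sc (gc n u * gc m s * gc l t)
            (\<Sum>s1\<le>u. \<Sum>s2\<le>s. sc (of_nat ((u choose s1) * (s choose s2))) (pr (t + s1 + s2) (pr (s - s2) b (pr (u - s1) a c)) d))) +
          (\<Sum>(u, s, t)\<in>tri w. sc (gc n u * gc m s * gc l t) (pr t c (pr s b (pr u a d)))) -
          (\<Sum>(u, s, t)\<in>tri w. sc (gc n u * gc m s * gc l t)
            (\<Sum>i\<le>u. sc (of_nat (u choose i)) (pr (s + i) (pr (u - i) a b) (pr t c d)))) -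
          (\<Sum>(u, s, t)\<in>tri w. sc (gc n u * gc m s * gc l t)
            (\<Sum>i\<le>u. sc (of_nat (u choose i)) (pr (t + i) (pr (u - i) a c) (pr s b d)))) -
          (\<Sum>(u, s, t)\<in>tri w. sc (gc n u * gc m s * gc l t)
            (\<Sum>i\<le>t. sc (of_nat (t choose i)) (pr (s + i) (pr (t - i) c b) (pr u a d)))) =
          (\<Sum>(u, s, t)\<in>tri w. sc (gc n u * gc m s * gc l t) (LHSc a b c d u s t - RHSc a b c d u s t))"
      unfolding LHSc_def RHSc_def
      by (simp add: split_def scale_right_distrib scale_right_diff_distrib sum.distrib sum_subtractf)
  qed
qed

end

context CA begin

lemma gc_nat: "gc (int n) u = of_nat (n choose u)"
  by (simp add: binomial_gbinomial)
lemma gc_nat': "((of_nat n :: 'k) gchoose u) = of_nat (n choose u)"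
  by (simp add: binomial_gbinomial)

lemma tri_top:
  assumes "w \<ge> n + m + l"
  shows "(\<Sum>(u, s, t)\<in>tri w. sc (gc (int n) u * gc (int m) s * gc (int l) t) (F u s t))
     = (if w = n + m + l then F n m l else 0)"
proof -
  have z: "sc (gc (int n) u * gc (int m) s * gc (int l) t) (F u s t) = 0" if "u > n \<or> s > m \<or> t > l" for u s t
    using that by (auto simp: gc_nat gc_nat')
  show ?thesis
  proof (cases "w = n + m + l")
    case True
    have "(\<Sum>(u, s, t)\<in>tri w. sc (gc (int n) u * gc (int m) s * gc (int l) t) (F u s t))
       = (\<Sum>(u, s, t)\<in>{(n, m, l)}. sc (gc (int n) u * gc (int m) s * gc (int l) t) (F u s t))"
    proof (rule sum.mono_neutral_right)
      show "finite (tri w)" by (rule finite_tri)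
      show "{(n, m, l)} \<subseteq> tri w" using True by (auto simp: tri_def)
      show "\<forall>x\<in>tri w - {(n, m, l)}. (case x of (u, s, t) \<Rightarrow> sc (gc (int n) u * gc (int m) s * gc (int l) t) (F u s t)) = 0"
      proof
        fix x assume "x \<in> tri w - {(n, m, l)}"
        then obtain u s t where x: "x = (u, s, t)" "u + s + t = w" "(u, s, t) \<noteq> (n, m, l)" by (auto simp: tri_def)
        then have "u > n \<or> s > m \<or> t > l" using True by auto
        then show "(case x of (u, s, t) \<Rightarrow> sc (gc (int n) u * gc (int m) s * gc (int l) t) (F u s t)) = 0"
          using z x by auto
      qed
    qed
    then show ?thesis using True by (simp add: gc_nat gc_nat')
  next
    case False
    then have "w > n + m + l" using assms by simp
    then have "(\<Sum>(u, s, t)\<in>tri w. sc (gc (int n) u * gc (int m) s * gc (int l) t) (F u s t)) = 0"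
    proof (intro sum.neutral ballI)
      fix x assume "x \<in> tri w"
      then obtain u s t where x: "x = (u, s, t)" "u + s + t = w" by (auto simp: tri_def)
      then have "u > n \<or> s > m \<or> t > l" using \<open>w > n + m + l\<close> by arith
      then show "(case x of (u, s, t) \<Rightarrow> sc (gc (int n) u * gc (int m) s * gc (int l) t) (F u s t)) = 0"
        using z x by auto
    qed
    then show ?thesis using False by simp
  qed
qed

lemma R_lowzero:
  assumes r: "r \<in> RR" and low: "\<And>j. j < -1 \<Longrightarrow> r j = 0"
  shows "r (-1) = 0"
proof -
  obtain h where h: "fin_supp h" "r = dd h" using R_repr[OF r] by blast
  define S where "S = {j. h j \<noteq> 0}"
  have fin: "finite S" using h(1) unfolding fin_supp_def S_def .
  define B where "B = min (-1) (Min (insert 0 S) - 1)"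
  have B1: "B \<le> -1" unfolding B_def by (rule min.cobounded1)
  have B3: "B \<le> Min (insert 0 S) - 1" unfolding B_def by (rule min.cobounded2)
  have B2: "h j = 0" if "j \<le> B" for j
  proof (rule ccontr)
    assume "h j \<noteq> 0"
    then have "j \<in> insert 0 S" unfolding S_def by blast
    then have "Min (insert 0 S) \<le> j" using fin by (intro Min_le) auto
    then show False using that B3 by linarith
  qed
  have step: "h (B + int i) = 0" if "B + int i \<le> -1" for i
    using that
  proof (induct i)
    case 0 then show ?case using B2 by simp
  next
    case (Suc i)
    define j where "j = B + int i"
    have j1: "j + 1 \<le> -1" using Suc(2) unfolding j_def by simp
    have hj: "h j = 0" using Suc(1) j1 unfolding j_def by simp
    have "r j = 0" using low j1 by simp
    then have "D (h j) + sc (of_int (j + 1)) (h (j + 1)) = 0" unfolding h(2) dd_def by simp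
    then have "sc (of_int (j + 1)) (h (j + 1)) = 0" using hj D_zero by simp
    moreover have "(of_int (j + 1) :: 'k) \<noteq> 0"
    proof -
      have "j + 1 \<noteq> 0" using j1 by linarith
      then show ?thesis unfolding of_int_eq_0_iff .
    qed
    ultimately have hj1: "h (j + 1) = 0" by simp
    have eq: "B + int (Suc i) = j + 1" unfolding j_def by simp
    show ?case by (simp only: eq hj1)
  qed
  have e: "B + int (nat (-1 - B)) = -1" using B1 by simp
  have "h (-1) = 0" using step[of "nat (-1 - B)"] unfolding e by simp
  then show ?thesis unfolding h(2) dd_def by (simp add: D_zero)
qed

lemma Qq_low:
  assumes "j < -1"
  shows "Qq (sg a (int n)) (sg b (int m)) (sg c (int l)) (sg d (-1)) j = 0"
proof -
  have w: "nat (int n + int m + int l + -1 - j) \<ge> n + m + l" "nat (int n + int m + int l + -1 - j) \<noteq> n + m + l"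
    using assms by linarith+
  have "Qq (sg a (int n)) (sg b (int m)) (sg c (int l)) (sg d (-1)) j = shape (int n + int m + int l + -1)
     (\<lambda>w. \<Sum>(u, s, t)\<in>tri w. sc (gc (int n) u * gc (int m) s * gc (int l) t) (LHSc a b c d u s t - RHSc a b c d u s t)) j"
    by (simp only: KEY)
  also have "\<dots> = 0" using assms unfolding shape_apply tri_top[OF w(1)] using w(2) by simp
  finally show ?thesis .
qed

lemma Qq_m1:
  "Qq (sg a (int n)) (sg b (int m)) (sg c (int l)) (sg d (-1)) (-1) = LHSc a b c d n m l - RHSc a b c d n m l"
proof -
  have w: "nat (int n + int m + int l + -1 - (-1)) = n + m + l" by simp
  have "Qq (sg a (int n)) (sg b (int m)) (sg c (int l)) (sg d (-1)) (-1) = shape (int n + int m + int l + -1)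
     (\<lambda>w. \<Sum>(u, s, t)\<in>tri w. sc (gc (int n) u * gc (int m) s * gc (int l) t) (LHSc a b c d u s t - RHSc a b c d u s t)) (-1)"
    by (simp only: KEY)
  also have "\<dots> = LHSc a b c d n m l - RHSc a b c d n m l" unfolding shape_apply w
    by (simp only: tri_top[OF order_refl]) simp
  finally show ?thesis .
qed

lemma dir1:
  assumes J: "coeff_jordan sc D pr"
  shows "LHSc a b c d n m l = RHSc a b c d n m l"
proof -
  have cm: comm and T: "\<And>x y. fin_supp x \<Longrightarrow> fin_supp y \<Longrightarrow> Tm x x x y \<in> RR"
    using J unfolding jordan_iff by auto
  let ?a = "sg a (int n)" and ?b = "sg b (int m)" and ?c = "sg c (int l)" and ?d = "sg d (-1)"
  have fs: "fin_supp ?a" "fin_supp ?b" "fin_supp ?c" "fin_supp ?d" by (simp_all add: fin_supp_sg)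
  have P: "Pp ?a ?c ?d ?b \<in> RR"
  proof -
    have s: "fin_supp (?a + ?c)" "fin_supp (?a + ?d)" "fin_supp (?c + ?d)" "fin_supp (?a + ?c + ?d)"
      using fs by (simp_all add: fin_supp_add)
    show ?thesis unfolding polarize[OF fs(1,3,4,2)]
      by (intro R_add R_diff T fs s)
  qed
  have "Qq ?a ?b ?c ?d + Qq ?a ?b ?c ?d \<in> RR"
  proof -
    have "Qq ?a ?b ?c ?d + Qq ?a ?b ?c ?d = Pp ?a ?c ?d ?b - (Pp ?a ?c ?d ?b - (Qq ?a ?b ?c ?d + Qq ?a ?b ?c ?d))"
      by simp
    then show ?thesis using R_diff[OF P PQ[OF cm fs(1,2,3,4)]] by simp
  qed
  then have "scf (1/2) (Qq ?a ?b ?c ?d + Qq ?a ?b ?c ?d) \<in> RR" by (rule R_scf)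
  moreover have "scf (1/2) (Qq ?a ?b ?c ?d + Qq ?a ?b ?c ?d) = Qq ?a ?b ?c ?d"
  proof
    fix j
    have two: "sc (2::'k) x = x + x" for x
    proof -
      have "sc (1 + 1 :: 'k) x = sc 1 x + sc 1 x" by (rule scale_left_distrib)
      then show ?thesis by simp
    qed
    have "sc (1/2) (Qq ?a ?b ?c ?d j + Qq ?a ?b ?c ?d j) = sc (1/2) (sc 2 (Qq ?a ?b ?c ?d j))"
      by (simp only: two)
    then show "scf (1/2) (Qq ?a ?b ?c ?d + Qq ?a ?b ?c ?d) j = Qq ?a ?b ?c ?d j"
      unfolding scf_def by simp
  qed
  ultimately have Q: "Qq ?a ?b ?c ?d \<in> RR" by simp
  have "Qq ?a ?b ?c ?d (-1) = 0"
    by (rule R_lowzero[OF Q]) (rule Qq_low)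
  then show ?thesis unfolding Qq_m1 by simp
qed

lemma dir2:
  assumes cm: comm and H: "\<And>a b c d n m l. LHSc a b c d n m l = RHSc a b c d n m l"
  shows "coeff_jordan sc D pr"
proof -
  have Pz: "Pp (sg a n) (sg c l) (sg d k) (sg b m) \<in> RR" for a b c d n l k m
  proof -
    have Q0: "Qq (sg a n) (sg b m) (sg c l) (sg d k) = 0"
      unfolding KEY H by (simp add: shape_zero)
    have "Pp (sg a n) (sg c l) (sg d k) (sg b m) - (Qq (sg a n) (sg b m) (sg c l) (sg d k) + Qq (sg a n) (sg b m) (sg c l) (sg d k)) \<in> RR"
      by (rule PQ[OF cm]) (simp_all add: fin_supp_sg)
    then show ?thesis unfolding Q0 by simp
  qed
  have "Tm x x x y \<in> RR" if "fin_supp x" "fin_supp y" for x y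
    unfolding Tm_from_Pp by (intro R_scf Pp_all[OF Pz] that)
  then show ?thesis unfolding jordan_iff using cm by blast
qed

lemma MAIN:
  assumes "coeff_commutative sc D pr"
  shows "coeff_jordan sc D pr \<longleftrightarrow> (\<forall>a b c d n m l. LHSc a b c d n m l = RHSc a b c d n m l)"
  using dir1 dir2 assms comm_iff by blast


end

theorem proposition3p4:
  fixes sc :: "'k::field_char_0 \<Rightarrow> 'c::ab_group_add \<Rightarrow> 'c"
    and D :: "'c \<Rightarrow> 'c"
    and pr :: "nat \<Rightarrow> 'c \<Rightarrow> 'c \<Rightarrow> 'c"
  assumes "conformal_algebra sc D pr"
    and "coeff_commutative sc D pr"
  shows "coeff_jordan sc D pr \<longleftrightarrow>
    (\<forall>a b c d n m l.
       pr n a (pr m b (pr l c d))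
       + (\<Sum>s1\<le>n. \<Sum>s2\<le>m. sc (of_nat ((n choose s1) * (m choose s2)))
            (pr (l + s1 + s2) (pr (m - s2) b (pr (n - s1) a c)) d))
       + pr l c (pr m b (pr n a d))
     = (\<Sum>s\<le>n. sc (of_nat (n choose s)) (pr (m + s) (pr (n - s) a b) (pr l c d)))
       + (\<Sum>s\<le>n. sc (of_nat (n choose s)) (pr (l + s) (pr (n - s) a c) (pr m b d)))
       + (\<Sum>s\<le>l. sc (of_nat (l choose s)) (pr (m + s) (pr (l - s) c b) (pr n a d))))"
proof -
  interpret CA sc D pr by (rule CA.intro) (rule assms(1))
  show ?thesis using MAIN[OF assms(2)] unfolding LHSc_def RHSc_def .
qed

end
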